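(* For all $n,s\in\mathbb{N}$ and every $p_{X,Y}\in\mathcal{E}[0,1]^2_n$ there exists a ReLU network $\Psi\in\mathcal{N}_{1,2}$ with connectivity $\mathcal{M}(\Psi)<88(n^2+ns)$ and depth $\mathcal{L}(\Psi)=s+5$ such that \[ W(\Psi\#U,\,p_{X,Y})\le\frac{2\sqrt2}{n2^s}. \]
   Context: $\mathcal{E}[0,1]^2_n$: densities $p(x,y)=\sum_{k_1,k_2=0}^{n-1}w_{k_1,k_2}\chi_{[k_1/n,(k_1+1)/n]\times[k_2/n,(k_2+1)/n]}(x,y)$ with all $w_{k_1,k_2}>0$ and $\sum w_{k_1,k_2}=n^2$. A ReLU network of depth $L\ge2$ is $\Phi=W_L\circ\rho\circ W_{L-1}\circ\cdots\circ\rho\circ W_1$ with affine $W_\ell(x)=A_\ell x+b_\ell$ and $\rho(x)=\max(x,0)$ componentwise; $\mathcal{L}(\Phi)=L$; $\mathcal{M}(\Phi)$ is the total number of nonzero entries of all $A_\ell,b_\ell$; $\mathcal{N}_{d,d'}$ is the set of such networks with input dimension $d$, output dimension $d'$. $U$ is uniform on $[0,1]$, $\#$ is push-forward, and $W$ is the 1-Wasserstein distance $W(\mu,\nu)=\inf_\pi\int|x-y|d\pi$ over couplings of $\mu,\nu$ with Euclidean norm. *)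

theory Defs
  imports "HOL-Probability.Probability"
begin

definition hist_density :: "nat \<Rightarrow> (nat \<Rightarrow> nat \<Rightarrow> real) \<Rightarrow> real \<times> real \<Rightarrow> real" where
  "hist_density n w = (\<lambda>(x, y). \<Sum>k1<n. \<Sum>k2<n.
      w k1 k2 * indicator ({real k1 / real n .. (real k1 + 1) / real n}
                         \<times> {real k2 / real n .. (real k2 + 1) / real n}) (x, y))"

definition hist_class :: "nat \<Rightarrow> (real \<times> real \<Rightarrow> real) set" where
  "hist_class n = {hist_density n w | w.
      (\<forall>k1<n. \<forall>k2<n. w k1 k2 > 0) \<and> (\<Sum>k1<n. \<Sum>k2<n. w k1 k2) = real n ^ 2}"

text \<open>A layer is an affine map given by its matrix (as a list of rows) and bias vector.\<close>
type_synonym layer = "real list list \<times> real list"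

definition affine_apply :: "layer \<Rightarrow> real list \<Rightarrow> real list" where
  "affine_apply l x = map2 (\<lambda>row bi. sum_list (map2 (*) row x) + bi) (fst l) (snd l)"

definition relu :: "real \<Rightarrow> real" where
  "relu x = max x 0"

fun realize :: "layer list \<Rightarrow> real list \<Rightarrow> real list" where
  "realize [] x = x"
| "realize [l] x = affine_apply l x"
| "realize (l # l' # ls) x = realize (l' # ls) (map relu (affine_apply l x))"

definition layer_dims :: "nat \<Rightarrow> nat \<Rightarrow> layer \<Rightarrow> bool" where
  "layer_dims d d' l \<longleftrightarrow> length (fst l) = d' \<and> length (snd l) = d'
      \<and> (\<forall>row \<in> set (fst l). length row = d)"

definition relu_nets :: "nat \<Rightarrow> nat \<Rightarrow> layer list set" where
  "relu_nets d d' = {ls. length ls \<ge> 2 \<and> (\<exists>ws. length ws = length ls + 1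
      \<and> ws ! 0 = d \<and> ws ! length ls = d'
      \<and> (\<forall>i < length ls. layer_dims (ws ! i) (ws ! Suc i) (ls ! i)))}"

definition depth :: "layer list \<Rightarrow> nat" where
  "depth ls = length ls"

definition connectivity :: "layer list \<Rightarrow> nat" where
  "connectivity ls = (\<Sum>l\<leftarrow>ls. length (filter (\<lambda>a. a \<noteq> 0) (concat (fst l)))
                                + length (filter (\<lambda>a. a \<noteq> 0) (snd l)))"

definition net_fun_1_2 :: "layer list \<Rightarrow> real \<Rightarrow> real \<times> real" where
  "net_fun_1_2 ls t = (let v = realize ls [t] in (v ! 0, v ! 1))"

definition coupling :: "'a measure \<Rightarrow> 'a measure \<Rightarrow> ('a \<times> 'a) measure \<Rightarrow> bool" where
  "coupling \<mu> \<nu> \<pi> \<longleftrightarrow> sets \<pi> = sets (\<mu> \<Otimes>\<^sub>M \<nu>)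
      \<and> distr \<pi> \<mu> fst = \<mu> \<and> distr \<pi> \<nu> snd = \<nu>"

definition wasserstein1 :: "'a::metric_space measure \<Rightarrow> 'a measure \<Rightarrow> ennreal" where
  "wasserstein1 \<mu> \<nu> = (INF \<pi> \<in> {\<pi>. coupling \<mu> \<nu> \<pi>}. \<integral>\<^sup>+ z. ennreal (dist (fst z) (snd z)) \<partial>\<pi>)"

definition unif01 :: "real measure" where
  "unif01 = uniform_measure lborel {0..1}"

definition pushforward_U :: "(real \<Rightarrow> real \<times> real) \<Rightarrow> (real \<times> real) measure" where
  "pushforward_U f = distr unif01 borel f"

definition density_measure :: "(real \<times> real \<Rightarrow> real) \<Rightarrow> (real \<times> real) measure" where
  "density_measure p = density lborel (\<lambda>z. ennreal (p z))"

end

theory Submission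
  imports Defs
begin

definition dot :: "real list \<Rightarrow> real list \<Rightarrow> real" where
  "dot r x = sum_list (map2 (*) r x)"

definition mkL :: "(real list \<times> real) list \<Rightarrow> layer" where
  "mkL P = (map fst P, map snd P)"

lemma affine_mkL: "affine_apply (mkL P) x = map (\<lambda>(r,b). dot r x + b) P"
  unfolding affine_apply_def mkL_def dot_def
  by (induction P) auto

fun hid :: "layer list \<Rightarrow> real list \<Rightarrow> real list" where
  "hid [] x = x"
| "hid (l # ls) x = hid ls (map relu (affine_apply l x))"

lemma realize_snoc: "realize (ls @ [l]) x = affine_apply l (hid ls x)"
proof (induction ls arbitrary: x)
  case Nil then show ?case by simp
next
  case (Cons l0 ls)
  obtain a list where e: "ls @ [l] = a # list" by (cases "ls @ [l]") auto
  have "realize ((l0 # ls) @ [l]) x = realize (l0 # a # list) x" using e by simp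
  also have "\<dots> = realize (ls @ [l]) (map relu (affine_apply l0 x))" using e by simp
  finally show ?case using Cons.IH by simp
qed

lemma hid_append: "hid (xs @ ys) x = hid ys (hid xs x)"
  by (induction xs arbitrary: x) auto

fun chain :: "nat \<Rightarrow> layer list \<Rightarrow> nat \<Rightarrow> bool" where
  "chain d [] d' = (d = d')"
| "chain d (l # ls) d' = (\<exists>e. layer_dims d e l \<and> chain e ls d')"

lemma chain_append: "chain d ls1 e \<Longrightarrow> chain e ls2 d' \<Longrightarrow> chain d (ls1 @ ls2) d'"
  by (induction ls1 arbitrary: d) auto

lemma chain_ws: "chain d ls d' \<Longrightarrow> \<exists>ws. length ws = length ls + 1 \<and> ws ! 0 = d \<and> ws ! length ls = d'
      \<and> (\<forall>i < length ls. layer_dims (ws ! i) (ws ! Suc i) (ls ! i))"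
proof (induction ls arbitrary: d)
  case Nil then show ?case by (intro exI[of _ "[d]"]) auto
next
  case (Cons l ls)
  then obtain e where e: "layer_dims d e l" "chain e ls d'" by auto
  then obtain ws where ws: "length ws = length ls + 1" "ws ! 0 = e" "ws ! length ls = d'"
      "\<forall>i < length ls. layer_dims (ws ! i) (ws ! Suc i) (ls ! i)" using Cons.IH by blast
  show ?case
  proof (intro exI[of _ "d # ws"] conjI allI impI)
    fix i assume "i < length (l # ls)"
    then show "layer_dims ((d # ws) ! i) ((d # ws) ! Suc i) ((l # ls) ! i)"
      using ws e by (cases i) auto
  qed (use ws in auto)
qed

lemma chain_replicate: "layer_dims d d l \<Longrightarrow> chain d (replicate k l) d"
  by (induction k) auto

lemma dims_mkL: "(\<And>r b. (r, b) \<in> set P \<Longrightarrow> length r = d) \<Longrightarrow> d' = length P \<Longrightarrow> layer_dims d d' (mkL P)"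
  unfolding layer_dims_def mkL_def by auto

definition nzc :: "layer \<Rightarrow> nat" where
  "nzc l = length (filter (\<lambda>a. a \<noteq> 0) (concat (fst l))) + length (filter (\<lambda>a. a \<noteq> 0) (snd l))"

lemma connectivity_nzc: "connectivity ls = (\<Sum>l\<leftarrow>ls. nzc l)"
  unfolding connectivity_def nzc_def by simp

lemma nzc_mkL_le: "nzc (mkL P) \<le> length (concat (map fst P)) + length P"
  unfolding nzc_def mkL_def
  by (simp add: add_mono length_filter_le)

lemma dot_Nil[simp]: "dot [] x = 0" "dot r [] = 0"
  by (auto simp: dot_def)

lemma dot_Cons[simp]: "dot (a # r) (b # x) = a * b + dot r x"
  by (simp add: dot_def)

lemma dot_append: "length r1 = length x1 \<Longrightarrow> dot (r1 @ r2) (x1 @ x2) = dot r1 x1 + dot r2 x2"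
  by (simp add: dot_def)

lemma dot_concat: "(\<And>l. l \<in> set L \<Longrightarrow> length (F l) = length (G l)) \<Longrightarrow>
   dot (concat (map F L)) (concat (map G L)) = (\<Sum>l\<leftarrow>L. dot (F l) (G l))"
  by (induction L) (auto simp: dot_append)

lemma dot_replicate0: "dot (replicate k 0) x = 0"
  unfolding dot_def by (induction k arbitrary: x) (auto simp: zip_Cons1 split: list.split)

lemma relu_nonneg: "relu x \<ge> 0" by (simp add: relu_def)
lemma relu_id: "x \<ge> 0 \<Longrightarrow> relu x = x" by (simp add: relu_def)
lemma relu_neg: "x \<le> 0 \<Longrightarrow> relu x = 0" by (simp add: relu_def)
lemma relu_relu[simp]: "relu (relu x) = relu x" by (simp add: relu_def)

locale hs =
  fixes n s :: nat and w :: "nat \<Rightarrow> nat \<Rightarrow> real"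
  assumes n1: "n \<ge> 1" and s1: "s \<ge> 1"
    and wpos: "\<And>k1 k2. k1 < n \<Longrightarrow> k2 < n \<Longrightarrow> w k1 k2 > 0"
    and wsum: "(\<Sum>k1<n. \<Sum>k2<n. w k1 k2) = real n ^ 2"
begin

definition "Wc k = (\<Sum>i<n. w k i)"
definition "c k = Wc k / real n ^ 2"
definition "C k = (\<Sum>j<k. c j)"
definition "a k j = (\<Sum>i<j. w k i) / Wc k"
definition "dl k j = w k j / Wc k"
definition "MM = (2::real) ^ s"

definition "L1 = mkL (concat (map (\<lambda>k. [([1], - C k), ([1], - C (Suc k))]) [0..<n]))"
definition "rowT = concat (map (\<lambda>k. [(-1)^k / c k, - ((-1)^k / c k)]) [0..<n])"
definition "rowV = concat (map (\<lambda>k. [1 / c k, - (1 / c k)]) [0..<n])"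
definition "L2 = mkL [(rowT, 0), (rowT, -1/2), (rowV, 0)]"
definition "Lpad = mkL [([1,0,0],0), ([0,1,0],0), ([0,0,1],0)]"
definition "Lg = mkL [([2,-4,0],0), ([2,-4,0],-1/2), ([0,0,1],0)]"
definition "L3 = mkL ([([2,-4,0],0), ([0,0,1],0)] @
    concat (map (\<lambda>k. [([0,0,-1], real k), ([0,0,1], - real k - 1)]) [0..<n]))"
definition "row4 k j = [1 / dl k j, 0] @
    concat (map (\<lambda>k'. if k' = k then [- MM / dl k j, - MM / dl k j] else [0,0]) [0..<n])"
definition "L4 = mkL (concat (map (\<lambda>k. concat (map (\<lambda>j.
     [(row4 k j, - a k j / dl k j), (row4 k j, - a k (Suc j) / dl k j)]) [0..<n])) [0..<n])
     @ [([0,1] @ replicate (2*n) 0, 0)])"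
definition "rowY = concat (map (\<lambda>k. concat (map (\<lambda>j. [1 / real n, - (1 / real n)]) [0..<n])) [0..<n])"
definition "L5 = mkL [(replicate (2*n*n) 0 @ [1 / real n], 0), (rowY @ [0], 0)]"
definition "Psi = [L1, L2, Lpad] @ replicate (s - 1) Lg @ [L3, L4, L5]"

lemma len_concat_const: "(\<And>x. x \<in> set L \<Longrightarrow> length (F x) = m) \<Longrightarrow> length (concat (map F L)) = length L * m"
  by (induction L) auto

lemma len_rowT: "length rowT = 2 * n" unfolding rowT_def by (subst len_concat_const[of _ _ 2]) auto
lemma len_rowV: "length rowV = 2 * n" unfolding rowV_def by (subst len_concat_const[of _ _ 2]) auto
lemma len_row4: "length (row4 k j) = 2 * n + 2" unfolding row4_def by (simp add: len_concat_const[of _ _ 2])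
lemma len_rowY: "length rowY = 2 * n * n" unfolding rowY_def
  by (subst len_concat_const[of _ _ "2*n"]) (auto simp: len_concat_const[of _ _ 2])

lemma chain_Psi: "chain 1 Psi 2"
proof -
  have l1: "layer_dims 1 (2*n) L1" unfolding L1_def
    by (rule dims_mkL) (auto simp: len_concat_const[of _ _ 2])
  have l2: "layer_dims (2*n) 3 L2" unfolding L2_def
    by (rule dims_mkL) (auto simp: len_rowT len_rowV)
  have lp: "layer_dims 3 3 Lpad" unfolding Lpad_def by (rule dims_mkL) auto
  have lg: "layer_dims 3 3 Lg" unfolding Lg_def by (rule dims_mkL) auto
  have l3: "layer_dims 3 (2*n+2) L3" unfolding L3_def
    by (rule dims_mkL) (auto simp: len_concat_const[of _ _ 2])
  have l4: "layer_dims (2*n+2) (2*n*n+1) L4" unfolding L4_def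
    by (rule dims_mkL) (auto simp: len_row4 len_concat_const[of _ _ "2*n"] len_concat_const[of _ _ 2])
  have l5: "layer_dims (2*n*n+1) 2 L5" unfolding L5_def
    by (rule dims_mkL) (auto simp: len_rowY)
  have c1: "chain 1 [L1, L2, Lpad] 3" using l1 l2 lp by auto
  have c2: "chain 3 (replicate (s - 1) Lg) 3" using lg by (rule chain_replicate)
  have c3: "chain 3 [L3, L4, L5] 2" using l3 l4 l5 by auto
  show ?thesis unfolding Psi_def
    by (rule chain_append[OF c1 chain_append[OF c2 c3]])
qed

lemma Psi_net: "Psi \<in> relu_nets 1 2"
  using chain_ws[OF chain_Psi] unfolding relu_nets_def by (auto simp: Psi_def)

lemma depth_Psi: "depth Psi = s + 5"
  using s1 unfolding depth_def Psi_def by simp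

end

definition nz :: "real list \<Rightarrow> nat" where "nz r = length (filter (\<lambda>a. a \<noteq> 0) r)"

lemma nz_append[simp]: "nz (xs @ ys) = nz xs + nz ys" by (simp add: nz_def)
lemma nz_concat: "nz (concat (map F L)) = (\<Sum>l\<leftarrow>L. nz (F l))"
  by (induction L) (auto simp: nz_def)
lemma nz_concat2: "nz (concat xs) = (\<Sum>x\<leftarrow>xs. nz x)"
  by (induction xs) (auto simp: nz_def)
lemma sum_list_concat_nat: "sum_list (concat (xs :: nat list list)) = (\<Sum>x\<leftarrow>xs. sum_list x)"
  by (induction xs) auto
lemma nz_le: "nz r \<le> length r" by (simp add: nz_def)

lemma sum_list_mono_nat: "(\<And>x. x \<in> set L \<Longrightarrow> (f x::nat) \<le> g x) \<Longrightarrow> (\<Sum>x\<leftarrow>L. f x) \<le> (\<Sum>x\<leftarrow>L. g x)"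
  by (induction L) (auto intro: add_mono)

lemma sum_list_const_nat: "(\<Sum>x\<leftarrow>L. (m::nat)) = length L * m"
  by (induction L) auto

lemma nzc_mkL_dims: "(\<And>r b. (r,b) \<in> set P \<Longrightarrow> length r = d) \<Longrightarrow> nzc (mkL P) \<le> length P * d + length P"
proof -
  assume h: "\<And>r b. (r,b) \<in> set P \<Longrightarrow> length r = d"
  have "length (concat (map fst P)) = length P * d"
    using h by (induction P) (auto, metis list.set_intros(2) prod.collapse)
  then show ?thesis using nzc_mkL_le[of P] by simp
qed

context hs begin

lemma nzc_mkL_nz: "nzc (mkL P) \<le> nz (concat (map fst P)) + length P"
  unfolding nzc_def mkL_def nz_def by (simp add: length_filter_le)

lemma nz_row4: "k < n \<Longrightarrow> nz (row4 k j) \<le> 3"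
proof -
  assume k: "k < n"
  have "nz (concat (map (\<lambda>k'. if k' = k then [- MM / dl k j, - MM / dl k j] else [0,0]) [0..<n]))
     = (\<Sum>k'\<leftarrow>[0..<n]. nz (if k' = k then [- MM / dl k j, - MM / dl k j] else [0,0]))"
    by (rule nz_concat)
  also have "\<dots> \<le> (\<Sum>k'\<leftarrow>[0..<n]. (if k' = k then 2 else 0))"
    by (rule sum_list_mono_nat) (auto simp: nz_def length_filter_le)
  also have "\<dots> = (\<Sum>k'\<in>{0..<n}. (if k' = k then 2 else 0))"
    by (simp add: sum_list_distinct_conv_sum_set)
  also have "\<dots> = 2" using k by simp
  finally show ?thesis unfolding row4_def by (simp add: nz_def)
qed

lemma conn_Psi: "connectivity Psi < 88 * (n ^ 2 + n * s)"
proof -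
  have c1: "nzc L1 \<le> 4 * n" unfolding L1_def
    by (rule order.trans[OF nzc_mkL_dims[where d=1]]) (auto simp: len_concat_const[of _ _ 2])
  have c2: "nzc L2 \<le> 6 * n + 3" unfolding L2_def
    using nzc_mkL_le[of "[(rowT, 0), (rowT, -1/2), (rowV, 0)]"] by (simp add: len_rowT len_rowV)
  have cp: "nzc Lpad \<le> 12" unfolding Lpad_def
    using nzc_mkL_le[of "[([1,0,0],0), ([0,1,0],0), ([0,0,1],0)]"] by simp
  have cg: "nzc Lg \<le> 12" unfolding Lg_def
    using nzc_mkL_le[of "[([2,-4,0],0), ([2,-4,0],-1/2), ([0,0,1],0)]"] by simp
  have c3: "nzc L3 \<le> 8 * n + 8" unfolding L3_def
    by (rule order.trans[OF nzc_mkL_dims[where d=3]]) (auto simp: len_concat_const[of _ _ 2])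
  have c4: "nzc L4 \<le> 8 * n * n + 2 * n + 3"
  proof -
    let ?P = "concat (map (\<lambda>k. concat (map (\<lambda>j.
     [(row4 k j, - a k j / dl k j), (row4 k j, - a k (Suc j) / dl k j)]) [0..<n])) [0..<n])"
    have "nz (concat (map fst ?P)) = (\<Sum>k\<leftarrow>[0..<n]. \<Sum>j\<leftarrow>[0..<n]. nz (row4 k j) + nz (row4 k j))"
      by (simp add: map_concat nz_concat2 sum_list_concat_nat comp_def)
    also have "\<dots> \<le> (\<Sum>k\<leftarrow>[0..<n]. \<Sum>j\<leftarrow>[0..<n]. 6)"
      by (intro sum_list_mono_nat) (auto intro!: sum_list_mono_nat simp: le_diff_conv2[symmetric] dest: nz_row4[of _ j for j],
           metis add_mono_thms_linordered_semiring(1) nz_row4 numeral_Bit0)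
    also have "\<dots> = 6 * n * n" by (simp add: sum_list_const_nat)
    finally have A: "nz (concat (map fst ?P)) \<le> 6 * n * n" .
    have B: "length ?P = 2 * n * n"
      by (subst len_concat_const[of _ _ "2*n"]) (auto simp: len_concat_const[of _ _ 2])
    have "nzc L4 \<le> nz (concat (map fst (?P @ [([0,1] @ replicate (2*n) 0, 0)]))) + length (?P @ [([0,1] @ replicate (2*n) 0, 0)])"
      unfolding L4_def by (rule nzc_mkL_nz)
    also have "\<dots> \<le> 6 * n * n + (2 * n + 2) + (2 * n * n + 1)"
      using A B nz_le[of "[0,1] @ replicate (2*n) 0"] by simp
    finally show ?thesis by simp
  qed
  have c5: "nzc L5 \<le> 4 * n * n + 4" unfolding L5_def
    using nzc_mkL_le[of "[(replicate (2*n*n) 0 @ [1 / real n], 0), (rowY @ [0], 0)]"] by (simp add: len_rowY)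
  have "connectivity Psi = nzc L1 + nzc L2 + nzc Lpad + (s - 1) * nzc Lg + nzc L3 + nzc L4 + nzc L5"
    unfolding connectivity_nzc Psi_def by (simp add: sum_list_replicate)
  also have "\<dots> \<le> 4 * n + (6 * n + 3) + 12 + (s - 1) * 12 + (8 * n + 8) + (8 * n * n + 2 * n + 3) + (4 * n * n + 4)"
    using c1 c2 cp cg c3 c4 c5 by (intro add_mono mult_le_mono) auto
  also have "\<dots> < 88 * (n ^ 2 + n * s)"
  proof -
    have "n * n \<ge> n" using n1 by simp
    moreover have "n * s \<ge> s" using n1 by simp
    moreover have "(s - 1) * 12 \<le> 12 * s" by simp
    ultimately have "n * (n * 76) \<ge> 76 * n" "n * (s * 88) \<ge> 88 * s" by simp_all
    then have "18 + (s * 12 + n * 20) < n * (n * 76) + n * (s * 88)" using n1 s1 by linarith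
    then show ?thesis using s1 by (simp add: power2_eq_square algebra_simps)
  qed
  finally show ?thesis .
qed

end

definition g :: "real \<Rightarrow> real" where "g x = 2 * relu x - 4 * relu (x - 1/2)"

context hs begin

definition "h1 t = concat (map (\<lambda>k. [relu (t - C k), relu (t - C (Suc k))]) [0..<n])"
definition "Tf t = dot rowT (h1 t)"
definition "Vf t = dot rowV (h1 t)"
definition "phi t = relu (g ((g ^^ (s - 1)) (Tf t)))"
definition "vv t = relu (Vf t)"
definition "x4 t = [phi t, vv t] @ concat (map (\<lambda>k. [relu (real k - vv t), relu (vv t + (- real k - 1))]) [0..<n])"
definition "u4 t = concat (map (\<lambda>k. concat (map (\<lambda>j.
     [relu (dot (row4 k j) (x4 t) + - a k j / dl k j), relu (dot (row4 k j) (x4 t) + - a k (Suc j) / dl k j)])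
     [0..<n])) [0..<n])"
definition "Xf t = vv t / real n"
definition "Yf t = dot rowY (u4 t)"

lemma relu_vv[simp]: "relu (vv t) = vv t" by (simp add: vv_def)

lemma hid_first: "hid [L1, L2, Lpad] [t] = [relu (Tf t), relu (Tf t - 1/2), vv t]"
  by (simp add: L1_def L2_def Lpad_def affine_mkL map_concat h1_def[symmetric]
      Tf_def[symmetric] Vf_def[symmetric] vv_def[symmetric] comp_def)

lemma hid_g: "v \<ge> 0 \<Longrightarrow> hid (replicate k Lg) [relu x, relu (x - 1/2), v] =
    [relu ((g ^^ k) x), relu ((g ^^ k) x - 1/2), v]"
proof (induction k arbitrary: x)
  case 0 then show ?case by simp
next
  case (Suc k)
  have "hid (replicate (Suc k) Lg) [relu x, relu (x - 1/2), v]
      = hid (replicate k Lg) [relu (g x), relu (g x - 1/2), v]"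
    using Suc.prems by (simp add: Lg_def affine_mkL g_def relu_id)
  also have "\<dots> = [relu ((g ^^ k) (g x)), relu ((g ^^ k) (g x) - 1/2), v]"
    by (rule Suc.IH[OF Suc.prems])
  finally show ?case by (simp add: funpow_swap1)
qed

lemma len_x4: "length (x4 t) = 2 * n + 2"
  unfolding x4_def by (simp add: len_concat_const[of _ _ 2])
lemma len_u4: "length (u4 t) = 2 * n * n"
  unfolding u4_def by (subst len_concat_const[of _ _ "2*n"]) (auto simp: len_concat_const[of _ _ 2])

lemma hid_last: "hid [L3, L4] [relu G, relu (G - 1/2), vv t] = u4 t @ [vv t]"
  if "phi t = relu (g G)"
proof -
  have a: "hid [L3] [relu G, relu (G - 1/2), vv t] = x4 t"
    using that by (simp add: L3_def affine_mkL g_def x4_def map_concat comp_def vv_def)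
  have b: "dot ([0,1] @ replicate (2*n) 0) (x4 t) = vv t"
    unfolding x4_def by (subst dot_append) (auto simp: dot_replicate0)
  have "hid [L4] (x4 t) = u4 t @ [vv t]"
    using b by (simp add: L4_def affine_mkL u4_def map_concat comp_def vv_def)
  then show ?thesis using a hid_append[of "[L3]" "[L4]"] by simp
qed

lemma realize_Psi: "realize Psi [t] = [Xf t, Yf t]"
proof -
  have "Psi = ([L1, L2, Lpad] @ replicate (s - 1) Lg @ [L3, L4]) @ [L5]"
    unfolding Psi_def by simp
  then have "realize Psi [t] = affine_apply L5 (hid ([L1, L2, Lpad] @ replicate (s - 1) Lg @ [L3, L4]) [t])"
    by (simp only: realize_snoc)
  also have "\<dots> = affine_apply L5 (hid [L3, L4] (hid (replicate (s - 1) Lg) (hid [L1, L2, Lpad] [t])))"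
    by (simp only: hid_append)
  also have "hid (replicate (s - 1) Lg) (hid [L1, L2, Lpad] [t]) =
      [relu ((g ^^ (s-1)) (Tf t)), relu ((g ^^ (s-1)) (Tf t) - 1/2), vv t]"
    unfolding hid_first by (rule hid_g) (simp add: vv_def relu_nonneg)
  also have "hid [L3, L4] \<dots> = u4 t @ [vv t]"
    by (rule hid_last) (simp add: phi_def)
  also have "affine_apply L5 (u4 t @ [vv t]) = [Xf t, Yf t]"
    by (simp add: L5_def affine_mkL dot_append len_u4 len_rowY dot_replicate0 Xf_def Yf_def)
  finally show ?thesis .
qed

lemma net_fun_Psi: "net_fun_1_2 Psi t = (Xf t, Yf t)"
  unfolding net_fun_1_2_def realize_Psi by simp

end

lemma g_lo: "0 \<le> x \<Longrightarrow> x \<le> 1/2 \<Longrightarrow> g x = 2 * x"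
  by (simp add: g_def relu_def)
lemma g_hi: "1/2 \<le> x \<Longrightarrow> x \<le> 1 \<Longrightarrow> g x = 2 - 2 * x"
  by (simp add: g_def relu_def)
lemma g_range: "0 \<le> x \<Longrightarrow> x \<le> 1 \<Longrightarrow> 0 \<le> g x \<and> g x \<le> 1"
  by (cases "x \<le> 1/2") (auto simp: g_lo g_hi)
lemma g_sym: "0 \<le> x \<Longrightarrow> x \<le> 1 \<Longrightarrow> g (1 - x) = g x"
  by (cases "x \<le> 1/2") (auto simp: g_lo g_hi)
lemma g_le: "0 \<le> x \<Longrightarrow> x \<le> 1 \<Longrightarrow> g x \<le> 2 * x"
  by (cases "x \<le> 1/2") (auto simp: g_lo g_hi)

lemma gk_range: "0 \<le> x \<Longrightarrow> x \<le> 1 \<Longrightarrow> 0 \<le> (g ^^ k) x \<and> (g ^^ k) x \<le> 1"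
  by (induction k) (auto simp: g_range)

lemma gk_le: "0 \<le> x \<Longrightarrow> x \<le> 1 \<Longrightarrow> (g ^^ k) x \<le> 2 ^ k * x"
proof (induction k arbitrary: x)
  case 0 then show ?case by simp
next
  case (Suc k)
  have "(g ^^ Suc k) x = (g ^^ k) (g x)" by (simp add: funpow_swap1)
  also have "\<dots> \<le> 2 ^ k * g x" using Suc.IH g_range[OF Suc.prems] by blast
  also have "\<dots> \<le> 2 ^ k * (2 * x)" using g_le[OF Suc.prems] by simp
  finally show ?case by simp
qed

lemma gk_sym: "k \<ge> 1 \<Longrightarrow> 0 \<le> x \<Longrightarrow> x \<le> 1 \<Longrightarrow> (g ^^ k) (1 - x) = (g ^^ k) x"
proof -
  assume "k \<ge> 1" "0 \<le> x" "x \<le> 1"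
  then obtain j where "k = Suc j" by (cases k) auto
  then show ?thesis using \<open>0 \<le> x\<close> \<open>x \<le> 1\<close> by (simp only: funpow_Suc_right comp_def g_sym)
qed

lemma gk_le2: "k \<ge> 1 \<Longrightarrow> 0 \<le> x \<Longrightarrow> x \<le> 1 \<Longrightarrow> (g ^^ k) x \<le> 2 ^ k * (1 - x)"
  using gk_le[of "1 - x" k] gk_sym[of k x] by simp

definition ustar :: "nat \<Rightarrow> nat \<Rightarrow> real \<Rightarrow> real" where
  "ustar k m \<sigma> = (if even m then (real m + \<sigma>) / 2 ^ k else (real m + 1 - \<sigma>) / 2 ^ k)"

lemma ustar_bounds: "0 \<le> \<sigma> \<Longrightarrow> \<sigma> \<le> 1 \<Longrightarrow>
   real m / 2 ^ k \<le> ustar k m \<sigma> \<and> ustar k m \<sigma> \<le> (real m + 1) / 2 ^ k"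
  by (auto simp: ustar_def divide_right_mono)

lemma gk_ustar: "0 \<le> \<sigma> \<Longrightarrow> \<sigma> \<le> 1 \<Longrightarrow> m < 2 ^ k \<Longrightarrow> (g ^^ k) (ustar k m \<sigma>) = \<sigma>"
proof (induction k arbitrary: m)
  case 0 then show ?case by (simp add: ustar_def)
next
  case (Suc k)
  have eq: "(g ^^ Suc k) (ustar (Suc k) m \<sigma>) = (g ^^ k) (g (ustar (Suc k) m \<sigma>))"
    by (simp add: funpow_swap1)
  show ?case
  proof (cases "m < 2 ^ k")
    case True
    have r: "real m + 1 \<le> 2 ^ k"
    proof -
      have "real (m + 1) \<le> real (2 ^ k)" using True by (simp only: of_nat_le_iff)
      then show ?thesis by simp
    qed
    have u: "real m / 2 ^ Suc k \<le> ustar (Suc k) m \<sigma>" "ustar (Suc k) m \<sigma> \<le> (real m + 1) / 2 ^ Suc k"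
      using ustar_bounds[OF Suc.prems(1,2), of m "Suc k"] by auto
    have "(real m + 1) / 2 ^ Suc k \<le> 1/2" using r by (simp add: field_simps)
    moreover have "0 \<le> real m / 2 ^ Suc k" by simp
    ultimately have b: "0 \<le> ustar (Suc k) m \<sigma>" "ustar (Suc k) m \<sigma> \<le> 1/2"
      using u by linarith+
    have "g (ustar (Suc k) m \<sigma>) = 2 * ustar (Suc k) m \<sigma>" by (rule g_lo[OF b])
    also have "\<dots> = ustar k m \<sigma>" by (simp add: ustar_def field_simps)
    finally have "g (ustar (Suc k) m \<sigma>) = ustar k m \<sigma>" .
    then show ?thesis using eq Suc.IH[OF Suc.prems(1,2) True] by simp
  next
    case False
    define m' where "m' = 2 ^ Suc k - 1 - m"
    have m'k: "m' < 2 ^ k" using False Suc.prems(3) by (simp add: m'_def)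
    have rm': "real m' = 2 ^ Suc k - 1 - real m" using Suc.prems(3)
      by (simp add: m'_def of_nat_diff)
    have par: "even m' \<longleftrightarrow> odd m" using Suc.prems(3) False
      by (simp add: m'_def even_diff_nat)
    have r: "2 ^ k \<le> real m" "real m + 1 \<le> 2 ^ Suc k"
    proof -
      have "real (2 ^ k) \<le> real m" using False by (simp only: of_nat_le_iff)
      then show "2 ^ k \<le> real m" by simp
      have "real (m + 1) \<le> real (2 ^ Suc k)" using Suc.prems(3) by (simp only: of_nat_le_iff)
      then show "real m + 1 \<le> 2 ^ Suc k" by simp
    qed
    have u: "real m / 2 ^ Suc k \<le> ustar (Suc k) m \<sigma>" "ustar (Suc k) m \<sigma> \<le> (real m + 1) / 2 ^ Suc k"
      using ustar_bounds[OF Suc.prems(1,2), of m "Suc k"] by auto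
    have "1/2 \<le> real m / 2 ^ Suc k" using r by (simp add: field_simps)
    moreover have "(real m + 1) / 2 ^ Suc k \<le> 1" using r by (simp add: field_simps)
    ultimately have b: "1/2 \<le> ustar (Suc k) m \<sigma>" "ustar (Suc k) m \<sigma> \<le> 1"
      using u by linarith+
    have "g (ustar (Suc k) m \<sigma>) = 2 - 2 * ustar (Suc k) m \<sigma>" by (rule g_hi[OF b])
    also have "\<dots> = ustar k m' \<sigma>" using par by (simp add: ustar_def field_simps rm')
    finally have "g (ustar (Suc k) m \<sigma>) = ustar k m' \<sigma>" .
    then show ?thesis using eq Suc.IH[OF Suc.prems(1,2) m'k] by simp
  qed
qed

lemma sum_col: "k1 < (NN::nat) \<Longrightarrow> (\<Sum>k<NN. if k < k1 then A k else if k = k1 then (B::real) else 0) = (\<Sum>k<k1. A k) + B"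
proof (induction NN)
  case 0 then show ?case by simp
next
  case (Suc N)
  show ?case
  proof (cases "k1 < N")
    case True then show ?thesis using Suc by simp
  next
    case False then have "k1 = N" using Suc.prems by simp
    then show ?thesis by simp
  qed
qed

lemma alt_sum: "(\<Sum>k<k1. (-1::real) ^ k) = (if even k1 then 0 else 1)"
  by (induction k1) auto

context hs begin

lemma Wc_pos: "k < n \<Longrightarrow> Wc k > 0"
  unfolding Wc_def using n1 wpos by (intro sum_pos) auto
lemma c_pos: "k < n \<Longrightarrow> c k > 0"
  unfolding c_def using Wc_pos n1 by simp
lemma sum_c: "(\<Sum>k<n. c k) = 1"
  using wsum n1 unfolding c_def Wc_def by (simp add: sum_divide_distrib[symmetric])
lemma C_0[simp]: "C 0 = 0" by (simp add: C_def)
lemma C_Suc: "C (Suc k) = C k + c k" by (simp add: C_def)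
lemma C_n: "C n = 1" using sum_c by (simp add: C_def)
lemma C_mono: "k \<le> k' \<Longrightarrow> k' \<le> n \<Longrightarrow> C k \<le> C k'"
proof (induction k' rule: dec_induct)
  case base then show ?case by simp
next
  case (step m) then show ?case using c_pos[of m] by (simp add: C_Suc)
qed
lemma C_nonneg: "k \<le> n \<Longrightarrow> 0 \<le> C k" using C_mono[of 0 k] by simp
lemma C_le1: "k \<le> n \<Longrightarrow> C k \<le> 1" using C_mono[of k n] C_n by simp

lemma dl_pos: "k < n \<Longrightarrow> j < n \<Longrightarrow> dl k j > 0"
  unfolding dl_def using Wc_pos wpos by simp
lemma a_0[simp]: "a k 0 = 0" by (simp add: a_def)
lemma a_Suc: "a k (Suc j) = a k j + dl k j" by (simp add: a_def dl_def add_divide_distrib)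
lemma a_n: "k < n \<Longrightarrow> a k n = 1" using Wc_pos[of k] by (simp add: a_def Wc_def)
lemma a_mono: "j \<le> j' \<Longrightarrow> k < n \<Longrightarrow> j' \<le> n \<Longrightarrow> a k j \<le> a k j'"
proof (induction j' rule: dec_induct)
  case base then show ?case by simp
next
  case (step m) then show ?case using dl_pos[of k m] by (simp add: a_Suc)
qed
lemma a_nonneg: "k < n \<Longrightarrow> j \<le> n \<Longrightarrow> 0 \<le> a k j" using a_mono[of 0 j k] by simp
lemma a_le1: "k < n \<Longrightarrow> j \<le> n \<Longrightarrow> a k j \<le> 1" using a_mono[of j n k] a_n by simp

lemma Vf_sum: "Vf t = (\<Sum>k<n. (relu (t - C k) - relu (t - C (Suc k))) / c k)"
  unfolding Vf_def rowV_def h1_def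
  by (subst dot_concat) (auto simp: sum_set_upt_conv_sum_list_nat[symmetric] atLeast0LessThan
      diff_divide_distrib intro!: sum.cong)
lemma Tf_sum: "Tf t = (\<Sum>k<n. (-1) ^ k * ((relu (t - C k) - relu (t - C (Suc k))) / c k))"
  unfolding Tf_def rowT_def h1_def
  by (subst dot_concat) (auto simp: sum_set_upt_conv_sum_list_nat[symmetric] atLeast0LessThan
      diff_divide_distrib right_diff_distrib intro!: sum.cong)

lemma term_col: assumes "k1 < n" "C k1 \<le> t" "t \<le> C (Suc k1)" "k < n"
  shows "(relu (t - C k) - relu (t - C (Suc k))) / c k =
     (if k < k1 then 1 else if k = k1 then (t - C k1) / c k1 else 0)"
proof -
  have ck: "c k > 0" using c_pos assms by simp
  consider "k < k1" | "k = k1" | "k > k1" by linarith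
  then show ?thesis
  proof cases
    case 1
    have "C (Suc k) \<le> C k1" using 1 assms by (intro C_mono) auto
    then have "relu (t - C k) = t - C k" "relu (t - C (Suc k)) = t - C (Suc k)"
      using assms ck by (auto simp: relu_def C_Suc)
    then show ?thesis using 1 ck by (simp add: C_Suc)
  next
    case 2
    then show ?thesis using assms by (simp add: relu_def)
  next
    case 3
    have "C (Suc k1) \<le> C k" using 3 assms by (intro C_mono) auto
    then have "relu (t - C k) = 0" "relu (t - C (Suc k)) = 0"
      using assms ck by (auto simp: relu_def C_Suc)
    then show ?thesis using 3 by simp
  qed
qed

definition "colu k1 t = (t - C k1) / c k1"

lemma col_vals: assumes "k1 < n" "C k1 \<le> t" "t \<le> C (Suc k1)"
  shows "Vf t = real k1 + colu k1 t" "Tf t = (if even k1 then colu k1 t else 1 - colu k1 t)"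
    "0 \<le> colu k1 t" "colu k1 t \<le> 1"
proof -
  have "Vf t = (\<Sum>k<n. if k < k1 then 1 else if k = k1 then colu k1 t else 0)"
    unfolding Vf_sum colu_def using assms by (intro sum.cong) (auto simp: term_col)
  then show "Vf t = real k1 + colu k1 t" using sum_col[OF assms(1)] by simp
  have "Tf t = (\<Sum>k<n. if k < k1 then (-1)^k else if k = k1 then (-1)^k1 * colu k1 t else 0)"
    unfolding Tf_sum colu_def using assms by (intro sum.cong) (auto simp: term_col)
  then show "Tf t = (if even k1 then colu k1 t else 1 - colu k1 t)"
    using sum_col[OF assms(1)] alt_sum by simp
  show "0 \<le> colu k1 t" "colu k1 t \<le> 1" using assms c_pos[of k1]
    by (auto simp: colu_def C_Suc field_simps)
qed

lemma phi_col: assumes "k1 < n" "C k1 \<le> t" "t \<le> C (Suc k1)"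
  shows "phi t = (g ^^ s) (colu k1 t)"
proof -
  note cv = col_vals[OF assms]
  have T01: "0 \<le> Tf t" "Tf t \<le> 1" using cv by auto
  have "(g ^^ s) (Tf t) = (g ^^ s) (colu k1 t)"
    using cv s1 gk_sym[of s "colu k1 t"] by auto
  moreover have "g ((g ^^ (s - 1)) (Tf t)) = (g ^^ s) (Tf t)"
    using s1 by (cases s) auto
  moreover have "0 \<le> (g ^^ s) (Tf t)" using gk_range[OF T01] by blast
  ultimately show ?thesis unfolding phi_def by (simp add: relu_id)
qed

end

context hs begin

definition "Dk t k = relu (real k - vv t) + relu (vv t + (- real k - 1))"

lemma dot_row4: assumes "k < n" "j < n"
  shows "dot (row4 k j) (x4 t) = (phi t - MM * Dk t k) / dl k j"
proof -
  have "dot (row4 k j) (x4 t) = phi t / dl k j +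
     (\<Sum>k'\<leftarrow>[0..<n]. dot (if k' = k then [- MM / dl k j, - MM / dl k j] else [0,0])
          [relu (real k' - vv t), relu (vv t + (- real k' - 1))])"
    unfolding row4_def x4_def by (subst dot_append) (auto simp: dot_concat)
  also have "(\<Sum>k'\<leftarrow>[0..<n]. dot (if k' = k then [- MM / dl k j, - MM / dl k j] else [0,0])
          [relu (real k' - vv t), relu (vv t + (- real k' - 1))])
     = (\<Sum>k'\<in>{..<n}. dot (if k' = k then [- MM / dl k j, - MM / dl k j] else [0,0])
          [relu (real k' - vv t), relu (vv t + (- real k' - 1))])"
    by (simp only: sum_set_upt_conv_sum_list_nat[symmetric] set_upt atLeast0LessThan)
  also have "\<dots> = (\<Sum>k'\<in>{..<n}. if k' = k then - MM / dl k j * Dk t k else 0)"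
    by (intro sum.cong) (auto simp: Dk_def algebra_simps)
  also have "\<dots> = - MM / dl k j * Dk t k" using assms by simp
  finally show ?thesis by (simp add: diff_divide_distrib)
qed

lemma Yf_sum: "Yf t = (\<Sum>k<n. \<Sum>j<n. (relu ((phi t - MM * Dk t k - a k j) / dl k j)
      - relu ((phi t - MM * Dk t k - a k (Suc j)) / dl k j)) / real n)"
proof -
  have "Yf t = (\<Sum>k\<leftarrow>[0..<n]. \<Sum>j\<leftarrow>[0..<n].
      1 / real n * relu (dot (row4 k j) (x4 t) + - a k j / dl k j) +
      - (1 / real n) * relu (dot (row4 k j) (x4 t) + - a k (Suc j) / dl k j))"
    unfolding Yf_def rowY_def u4_def
    by (subst dot_concat) (auto simp: len_concat_const[of _ _ 2] dot_concat)
  also have "\<dots> = (\<Sum>k<n. \<Sum>j<n. (relu ((phi t - MM * Dk t k - a k j) / dl k j)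
      - relu ((phi t - MM * Dk t k - a k (Suc j)) / dl k j)) / real n)"
    by (auto simp: sum_set_upt_conv_sum_list_nat[symmetric] atLeast0LessThan dot_row4
       diff_divide_distrib intro!: sum.cong)
  finally show ?thesis .
qed

lemma Yf_col: assumes "k1 < n" "C k1 \<le> t" "t \<le> C (Suc k1)"
  shows "Yf t = (\<Sum>j<n. relu ((phi t - a k1 j) / dl k1 j) - relu ((phi t - a k1 (Suc j)) / dl k1 j)) / real n"
proof -
  note cv = col_vals[OF assms]
  let ?u = "colu k1 t"
  have vv: "vv t = real k1 + ?u" using cv by (simp add: vv_def relu_id)
  have ph: "phi t = (g ^^ s) ?u" by (rule phi_col[OF assms])
  have p1: "phi t \<le> MM * ?u" unfolding ph MM_def using gk_le cv by auto
  have p2: "phi t \<le> MM * (1 - ?u)" unfolding ph MM_def using gk_le2 cv s1 by auto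
  have D0: "Dk t k1 = 0" using cv by (simp add: Dk_def vv relu_def)
  have zero: "relu ((phi t - MM * Dk t k - a k j) / dl k j) - relu ((phi t - MM * Dk t k - a k (Suc j)) / dl k j) = 0"
    if k: "k < n" "k \<noteq> k1" and j: "j < n" for k j
  proof -
    have "phi t \<le> MM * Dk t k"
    proof (cases "k < k1")
      case True
      have "?u \<le> Dk t k" unfolding Dk_def vv using True relu_nonneg[of "real k - (real k1 + ?u)"]
        by (auto simp: relu_def)
      then show ?thesis using p1 by (simp add: MM_def order.trans)
    next
      case False
      then have "k > k1" using k by simp
      then have "1 - ?u \<le> Dk t k" unfolding Dk_def vv
        using relu_nonneg[of "real k1 + ?u + (- real k - 1)"] by (auto simp: relu_def)
      then show ?thesis using p2 by (simp add: MM_def order.trans)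
    qed
    moreover have "dl k j > 0" using dl_pos k j by simp
    moreover have "0 \<le> a k j" "0 \<le> a k (Suc j)" using a_nonneg k j by auto
    ultimately show ?thesis by (simp add: relu_neg divide_nonpos_pos)
  qed
  have "Yf t = (\<Sum>k<n. if k = k1 then (\<Sum>j<n. (relu ((phi t - a k1 j) / dl k1 j)
      - relu ((phi t - a k1 (Suc j)) / dl k1 j)) / real n) else 0)"
    unfolding Yf_sum using D0 zero by (intro sum.cong) auto
  also have "\<dots> = (\<Sum>j<n. (relu ((phi t - a k1 j) / dl k1 j)
      - relu ((phi t - a k1 (Suc j)) / dl k1 j)) / real n)" using assms by simp
  finally show ?thesis by (simp add: sum_divide_distrib)
qed

lemma H_eval: assumes "k1 < n" "k2 < n" "a k1 k2 \<le> \<phi>" "\<phi> \<le> a k1 (Suc k2)"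
  shows "(\<Sum>j<n. relu ((\<phi> - a k1 j) / dl k1 j) - relu ((\<phi> - a k1 (Suc j)) / dl k1 j))
     = real k2 + (\<phi> - a k1 k2) / dl k1 k2"
proof -
  have "(\<Sum>j<n. relu ((\<phi> - a k1 j) / dl k1 j) - relu ((\<phi> - a k1 (Suc j)) / dl k1 j))
     = (\<Sum>j<n. if j < k2 then 1 else if j = k2 then (\<phi> - a k1 k2) / dl k1 k2 else 0)"
  proof (intro sum.cong refl)
    fix j assume j: "j \<in> {..<n}"
    have d: "dl k1 j > 0" using dl_pos assms j by simp
    consider "j < k2" | "j = k2" | "j > k2" by linarith
    then show "relu ((\<phi> - a k1 j) / dl k1 j) - relu ((\<phi> - a k1 (Suc j)) / dl k1 j)
        = (if j < k2 then 1 else if j = k2 then (\<phi> - a k1 k2) / dl k1 k2 else 0)"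
    proof cases
      case 1
      have "a k1 (Suc j) \<le> a k1 k2" using 1 assms by (intro a_mono) auto
      then have e1: "relu ((\<phi> - a k1 j) / dl k1 j) = (\<phi> - a k1 j) / dl k1 j"
           and e2: "relu ((\<phi> - a k1 (Suc j)) / dl k1 j) = (\<phi> - a k1 (Suc j)) / dl k1 j"
        using assms d by (auto intro!: relu_id simp: a_Suc)
      show ?thesis using 1 d unfolding e1 e2 by (simp add: a_Suc field_simps)
    next
      case 2
      then show ?thesis using assms d by (simp add: relu_id relu_neg divide_nonpos_pos)
    next
      case 3
      have "a k1 (Suc k2) \<le> a k1 j" using 3 assms j by (intro a_mono) auto
      moreover have "a k1 j \<le> a k1 (Suc j)" using d by (simp add: a_Suc)
      ultimately show ?thesis using 3 assms d
        by (simp add: relu_neg divide_nonpos_pos)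
    qed
  qed
  also have "\<dots> = real k2 + (\<phi> - a k1 k2) / dl k1 k2" using sum_col[OF assms(2)] by simp
  finally show ?thesis .
qed

end

context hs begin

definition "kx x = min (nat \<lfloor>real n * x\<rfloor>) (n - 1)"
definition "ux x = real n * x - real (kx x)"
definition "mx x = min (nat \<lfloor>MM * ux x\<rfloor>) (2 ^ s - 1)"
definition "sig k y = a k (kx y) + dl k (kx y) * (real n * y - real (kx y))"
definition "theta z = C (kx (fst z)) + c (kx (fst z)) * ustar s (mx (fst z)) (sig (kx (fst z)) (snd z))"

lemma kx_bounds: assumes "0 \<le> x" "x \<le> 1"
  shows "kx x < n" "0 \<le> ux x" "ux x \<le> 1"
proof -
  have nx: "0 \<le> real n * x" "real n * x \<le> real n" using assms n1 by (auto simp: mult_left_le)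
  show "kx x < n" using n1 by (simp add: kx_def)
  have "0 \<le> ux x \<and> ux x \<le> 1"
  proof (cases "nat \<lfloor>real n * x\<rfloor> \<le> n - 1")
    case True
    then have "kx x = nat \<lfloor>real n * x\<rfloor>" by (simp add: kx_def)
    then have "real (kx x) = of_int \<lfloor>real n * x\<rfloor>" using nx by simp
    moreover have "of_int \<lfloor>real n * x\<rfloor> \<le> real n * x" "real n * x < of_int \<lfloor>real n * x\<rfloor> + 1"
      using of_int_floor_le[of "real n * x"] real_of_int_floor_add_one_gt[of "real n * x"] by auto
    ultimately show ?thesis unfolding ux_def by linarith
  next
    case False
    then have k: "kx x = n - 1" by (simp add: kx_def)
    have "\<lfloor>real n * x\<rfloor> \<ge> int n" using False n1 by linarith
    then have "real n * x \<ge> real n" by (simp add: le_floor_iff)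
    then have "real n * x = real n" using nx by simp
    then show ?thesis unfolding ux_def k using n1 by (simp add: of_nat_diff)
  qed
  then show "0 \<le> ux x" "ux x \<le> 1" by auto
qed

lemma MM_pos: "MM > 0" by (simp add: MM_def)

lemma mx_bounds: assumes "0 \<le> u" "u \<le> 1" "ux x = u"
  shows "mx x < 2 ^ s" "real (mx x) / 2 ^ s \<le> u" "u \<le> (real (mx x) + 1) / 2 ^ s"
proof -
  have mu: "0 \<le> MM * u" "MM * u \<le> MM" using assms MM_pos by (auto simp: mult_left_le)
  have "(2::nat) ^ s - 1 < 2 ^ s" by simp
  then show "mx x < 2 ^ s" unfolding mx_def by linarith
  have "real (mx x) \<le> MM * u \<and> MM * u \<le> real (mx x) + 1"
  proof (cases "nat \<lfloor>MM * u\<rfloor> \<le> 2 ^ s - 1")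
    case True
    then have "mx x = nat \<lfloor>MM * u\<rfloor>" using assms by (simp add: mx_def)
    then have "real (mx x) = of_int \<lfloor>MM * u\<rfloor>" using mu by simp
    moreover have "of_int \<lfloor>MM * u\<rfloor> \<le> MM * u" "MM * u < of_int \<lfloor>MM * u\<rfloor> + 1"
      using of_int_floor_le[of "MM * u"] real_of_int_floor_add_one_gt[of "MM * u"] by auto
    ultimately show ?thesis by linarith
  next
    case False
    then have k: "mx x = 2 ^ s - 1" using assms by (simp add: mx_def)
    have p: "(2::nat) ^ s > 0" by simp
    have A: "2 ^ s \<le> nat \<lfloor>MM * u\<rfloor>" using False p by linarith
    have B: "real (nat \<lfloor>MM * u\<rfloor>) \<le> MM * u" using mu by (simp add: of_int_floor_le)
    have "real ((2::nat) ^ s) \<le> real (nat \<lfloor>MM * u\<rfloor>)" using A by (simp only: of_nat_le_iff)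
    then have "real ((2::nat) ^ s) \<le> MM * u" using B by (rule order.trans)
    then have "MM * u \<ge> 2 ^ s" by simp
    then have "MM * u = 2 ^ s" using mu by (simp add: MM_def)
    then show ?thesis unfolding k by (simp add: of_nat_diff MM_def)
  qed
  then show "real (mx x) / 2 ^ s \<le> u" "u \<le> (real (mx x) + 1) / 2 ^ s"
    using MM_pos by (auto simp: MM_def field_simps)
qed

lemma ustar_01: "0 \<le> \<sigma> \<Longrightarrow> \<sigma> \<le> 1 \<Longrightarrow> m < 2 ^ k \<Longrightarrow> 0 \<le> ustar k m \<sigma> \<and> ustar k m \<sigma> \<le> 1"
proof -
  assume a: "0 \<le> \<sigma>" "\<sigma> \<le> 1" "m < 2 ^ k"
  have "real (m + 1) \<le> real (2 ^ k)" using a(3) by (simp only: of_nat_le_iff)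
  then have "real m + 1 \<le> 2 ^ k" by simp
  then have "(real m + 1) / 2 ^ k \<le> 1" by simp
  moreover have "0 \<le> real m / 2 ^ k" by simp
  ultimately show ?thesis using ustar_bounds[OF a(1,2), of m k] by linarith
qed

lemma key: assumes x: "0 \<le> x" "x \<le> 1" and y: "0 \<le> y" "y \<le> 1"
  shows "C (kx x) \<le> theta (x, y)" "theta (x, y) \<le> C (Suc (kx x))"
    "Yf (theta (x, y)) = y" "\<bar>Xf (theta (x, y)) - x\<bar> \<le> 1 / (real n * 2 ^ s)"
proof -
  define k1 where "k1 = kx x"
  define u where "u = ux x"
  define m where "m = mx x"
  define k2 where "k2 = kx y"
  define \<sigma> where "\<sigma> = sig k1 y"
  define us where "us = ustar s m \<sigma>"
  define t where "t = theta (x, y)"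
  have k1: "k1 < n" and u: "0 \<le> u" "u \<le> 1" using kx_bounds[OF x] by (auto simp: k1_def u_def)
  have m: "m < 2 ^ s" "real m / 2 ^ s \<le> u" "u \<le> (real m + 1) / 2 ^ s"
    using mx_bounds[OF u] by (auto simp: m_def u_def)
  have k2: "k2 < n" "0 \<le> ux y" "ux y \<le> 1" using kx_bounds[OF y] by (auto simp: k2_def)
  have sg: "\<sigma> = a k1 k2 + dl k1 k2 * ux y" by (simp add: \<sigma>_def sig_def k2_def ux_def)
  have dl: "dl k1 k2 > 0" using dl_pos k1 k2 by simp
  have sb: "a k1 k2 \<le> \<sigma>" "\<sigma> \<le> a k1 (Suc k2)"
    using sg dl k2 by (auto simp: a_Suc mult_left_le)
  have s01: "0 \<le> \<sigma>" "\<sigma> \<le> 1" using sb a_nonneg[of k1 k2] a_le1[of k1 "Suc k2"] k1 k2 by auto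
  have usb: "real m / 2 ^ s \<le> us" "us \<le> (real m + 1) / 2 ^ s" using ustar_bounds[OF s01] by (auto simp: us_def)
  have us01: "0 \<le> us" "us \<le> 1" using ustar_01[OF s01 m(1)] by (auto simp: us_def)
  have ck: "c k1 > 0" using c_pos k1 by simp
  have t: "t = C k1 + c k1 * us" by (simp add: t_def theta_def k1_def us_def m_def \<sigma>_def)
  have tb: "C k1 \<le> t" "t \<le> C (Suc k1)" using t us01 ck by (auto simp: C_Suc mult_left_le)
  then show "C (kx x) \<le> theta (x, y)" "theta (x, y) \<le> C (Suc (kx x))" by (auto simp: t_def k1_def)
  have cu: "colu k1 t = us" using ck by (simp add: colu_def t)
  have ph: "phi t = \<sigma>" using phi_col[OF k1 tb] cu gk_ustar[OF s01 m(1)] by (simp add: us_def)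
  have "Yf t = (real k2 + (\<sigma> - a k1 k2) / dl k1 k2) / real n"
    using Yf_col[OF k1 tb] H_eval[OF k1 k2(1) sb] ph by simp
  also have "\<dots> = y" using dl n1 by (simp add: sg ux_def k2_def)
  finally show "Yf (theta (x, y)) = y" by (simp add: t_def)
  have vv: "vv t = real k1 + us" using col_vals[OF k1 tb] cu by (simp add: vv_def relu_id)
  have xe: "x = (real k1 + u) / real n" using n1 by (simp add: u_def ux_def k1_def)
  have "\<bar>us - u\<bar> \<le> 1 / 2 ^ s" using usb m by (simp add: abs_le_iff diff_divide_distrib[symmetric] add_divide_distrib)
  then have "\<bar>Xf t - x\<bar> \<le> 1 / (real n * 2 ^ s)" using n1
    by (simp add: Xf_def vv xe diff_divide_distrib[symmetric] field_simps)
  then show "\<bar>Xf (theta (x, y)) - x\<bar> \<le> 1 / (real n * 2 ^ s)" by (simp add: t_def)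
qed

end

context hs begin
lemma kx_meas[measurable]: "kx \<in> measurable borel (count_space UNIV)"
  unfolding kx_def by measurable
lemma ux_meas[measurable]: "ux \<in> borel_measurable borel"
  unfolding ux_def by measurable
lemma mx_meas[measurable]: "mx \<in> measurable borel (count_space UNIV)"
  unfolding mx_def by measurable
lemma sig_meas[measurable]: "sig k \<in> borel_measurable borel"
  unfolding sig_def by measurable
lemma theta_meas2: "theta \<in> borel_measurable (borel \<Otimes>\<^sub>M borel)"
  unfolding theta_def ustar_def by measurable
lemma theta_meas[measurable]: "theta \<in> borel_measurable borel"
  using theta_meas2 by (simp add: borel_prod)
end

lemma null_point: "A \<in> sets borel \<Longrightarrow> A \<inter> {b::real} \<in> null_sets lborel"
  by (rule null_sets_subset[of "{b}"]) auto

lemma split_Icc: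
  assumes "a \<le> b" "b \<le> c" "A \<in> sets borel"
  shows "emeasure lborel (A \<inter> {a..b}) + emeasure lborel (A \<inter> {b..c}) = emeasure lborel (A \<inter> {a..(c::real)})"
proof -
  have e1: "A \<inter> {a..b} = (A \<inter> {a..<b}) \<union> (A \<inter> {b})" using assms by auto
  have "emeasure lborel (A \<inter> {a..b}) = emeasure lborel (A \<inter> {a..<b})"
    unfolding e1 using assms by (intro emeasure_Un_null_set null_point) auto
  moreover have "A \<inter> {a..c} = (A \<inter> {a..<b}) \<union> (A \<inter> {b..c})" using assms by auto
  moreover have "emeasure lborel (A \<inter> {a..<b}) + emeasure lborel (A \<inter> {b..c}) = emeasure lborel ((A \<inter> {a..<b}) \<union> (A \<inter> {b..c}))"
    using assms by (intro plus_emeasure) auto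
  ultimately show ?thesis by simp
qed

lemma chain_mono: "(\<And>i. i < N \<Longrightarrow> b i \<le> b (Suc i)) \<Longrightarrow> (b 0::real) \<le> b N"
  by (induction N) (auto intro: order.trans)

lemma telescope:
  assumes "\<And>i. i < N \<Longrightarrow> b i \<le> b (Suc i)" "A \<in> sets borel"
  shows "(\<Sum>i<N. emeasure lborel (A \<inter> {b i..b (Suc i)})) = emeasure lborel (A \<inter> {b 0..(b N :: real)})"
  using assms(1)
proof (induction N)
  case 0
  have "emeasure lborel (A \<inter> {b 0..b 0}) = 0"
    using null_point[OF assms(2), of "b 0"] by (simp add: null_sets_def)
  then show ?case by simp
next
  case (Suc N)
  have "(\<Sum>i<Suc N. emeasure lborel (A \<inter> {b i..b (Suc i)})) =
     emeasure lborel (A \<inter> {b 0..b N}) + emeasure lborel (A \<inter> {b N..b (Suc N)})"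
    using Suc by simp
  also have "\<dots> = emeasure lborel (A \<inter> {b 0..b (Suc N)})"
    using Suc.prems chain_mono[of N b] assms(2) by (intro split_Icc) auto
  finally show ?case .
qed

lemma affine_piece:
  assumes b: "\<beta> \<noteq> 0" and lr: "l \<le> r" and tau: "\<And>y. l \<le> y \<Longrightarrow> y \<le> r \<Longrightarrow> \<tau> y = \<alpha> + \<beta> * y"
    and A: "A \<in> sets borel"
  shows "ennreal \<bar>\<beta>\<bar> * (\<integral>\<^sup>+y. indicator {l..r} y * indicator A (\<tau> y) \<partial>lborel) =
    emeasure lborel (A \<inter> {min (\<alpha> + \<beta> * l) (\<alpha> + \<beta> * r) .. max (\<alpha> + \<beta> * l) (\<alpha> + \<beta> * (r::real))})"
proof -
  define J where "J = {min (\<alpha> + \<beta> * l) (\<alpha> + \<beta> * r) .. max (\<alpha> + \<beta> * l) (\<alpha> + \<beta> * r)}"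
  have iff: "\<alpha> + \<beta> * y \<in> J \<longleftrightarrow> l \<le> y \<and> y \<le> r" for y
  proof (cases "\<beta> > 0")
    case True
    then show ?thesis using lr unfolding J_def by (auto simp: min_def max_def mult_le_cancel_left)
  next
    case False
    then have "\<beta> < 0" using b by simp
    then show ?thesis using lr unfolding J_def by (auto simp: min_def max_def mult_le_cancel_left)
  qed
  have eq: "indicator {l..r} y * indicator A (\<tau> y) = (indicator (A \<inter> J) (\<alpha> + \<beta> * y) :: ennreal)" for y
    using iff[of y] tau[of y] by (auto simp: indicator_def)
  have "emeasure lborel (A \<inter> J) = (\<integral>\<^sup>+x. indicator (A \<inter> J) x \<partial>lborel)"
    using A by (simp add: J_def)
  also have "\<dots> = ennreal \<bar>\<beta>\<bar> * (\<integral>\<^sup>+y. indicator (A \<inter> J) (\<alpha> + \<beta> * y) \<partial>lborel)"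
    using A b by (intro nn_integral_real_affine) (auto simp: J_def)
  finally show ?thesis unfolding eq J_def by simp
qed

lemma ind_partition:
  assumes "\<And>i. i < N \<Longrightarrow> b i \<le> b (Suc i)"
  shows "indicator {b 0..<b N} x = (\<Sum>i<N. indicator {b i..<b (Suc i)} (x::real) :: ennreal)"
  using assms
proof (induction N)
  case 0 then show ?case by simp
next
  case (Suc N)
  have m: "b 0 \<le> b N" using chain_mono[of N b] Suc.prems by auto
  have "indicator {b 0..<b (Suc N)} x = (indicator {b 0..<b N} x + indicator {b N..<b (Suc N)} x :: ennreal)"
    using m Suc.prems[of N] by (auto simp: indicator_def)
  then show ?case using Suc by simp
qed

context hs begin

lemma sig_row: assumes k: "k < n" and j: "j < n" and y: "real j / real n \<le> y" "y \<le> (real j + 1) / real n"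
  shows "sig k y = a k j + dl k j * (real n * y - real j)"
proof -
  have n0: "real n > 0" using n1 by simp
  have ny: "real j \<le> real n * y" "real n * y \<le> real j + 1" using y n0 by (auto simp: field_simps)
  have y01: "0 \<le> y" "y \<le> 1"
  proof -
    show "0 \<le> y" using y(1) n0 by (meson divide_nonneg_pos of_nat_0_le_iff order.trans)
    have "(real j + 1) / real n \<le> 1" using j n0 by (simp add: field_simps)
    then show "y \<le> 1" using y(2) by linarith
  qed
  define j' where "j' = kx y"
  have j': "j' < n" "0 \<le> real n * y - real j'" "real n * y - real j' \<le> 1"
    using kx_bounds[OF y01] by (auto simp: j'_def ux_def)
  have "real j' \<le> real j + 1" "real j - 1 \<le> real j'" using j' ny by linarith+
  then have "j' = j \<or> j' = Suc j \<or> Suc j' = j" by linarith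
  then show ?thesis
  proof (elim disjE)
    assume "j' = j" then show ?thesis by (simp add: sig_def j'_def)
  next
    assume e: "j' = Suc j"
    then have "real n * y = real j + 1" using j' ny by simp
    then show ?thesis using e by (simp add: sig_def j'_def[symmetric] a_Suc)
  next
    assume e: "Suc j' = j"
    then have "real n * y = real j" using j' ny by simp
    moreover have "real j - real j' = 1" "a k j = a k j' + dl k j'" using e[symmetric] by (auto simp: a_Suc)
    ultimately show ?thesis by (simp add: sig_def j'_def[symmetric])
  qed
qed

definition "T k1 m \<sigma> = C k1 + c k1 * ustar s m \<sigma>"
definition "xl k1 m = (real k1 + real m / MM) / real n"

lemma strip_idx: assumes k1: "k1 < n" and m: "m < 2 ^ s" and x: "xl k1 m \<le> x" "x < xl k1 (Suc m)"
  shows "kx x = k1" "mx x = m"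
proof -
  have n0: "real n > 0" using n1 by simp
  have mm: "real m + 1 \<le> MM"
  proof -
    have "real (m + 1) \<le> real (2 ^ s)" using m by (simp only: of_nat_le_iff)
    then show ?thesis by (simp add: MM_def)
  qed
  have nx: "real k1 + real m / MM \<le> real n * x" "real n * x < real k1 + (real m + 1) / MM"
    using x n0 by (auto simp: xl_def field_simps)
  have "real m / MM \<ge> 0" using MM_pos by simp
  moreover have "(real m + 1) / MM \<le> 1" using mm MM_pos by simp
  ultimately have fl: "\<lfloor>real n * x\<rfloor> = int k1" using nx by (intro floor_unique) auto
  then show kk: "kx x = k1" using k1 by (simp add: kx_def)
  have u: "ux x = real n * x - real k1" by (simp add: ux_def kk)
  have "real m \<le> MM * ux x" "MM * ux x < real m + 1"
    using nx MM_pos unfolding u by (auto simp: field_simps)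
  then have "\<lfloor>MM * ux x\<rfloor> = int m" by (intro floor_unique) auto
  then show "mx x = m" using m by (simp add: mx_def)
qed

lemma theta_strip: assumes "k1 < n" "m < 2 ^ s" "xl k1 m \<le> x" "x < xl k1 (Suc m)"
  shows "theta (x, y) = T k1 m (sig k1 y)"
  using strip_idx[OF assms] by (simp add: theta_def T_def)

definition "Jt k1 k2 m = (if even m then {T k1 m (a k1 k2) .. T k1 m (a k1 (Suc k2))}
     else {T k1 m (a k1 (Suc k2)) .. T k1 m (a k1 k2)})"

lemma T_affine: "T k1 m (a0 + d * z) = T k1 m a0 + (if even m then 1 else -1) * (c k1 * d / MM) * z"
  by (simp add: T_def ustar_def MM_def field_simps)

lemma row_piece: assumes k1: "k1 < n" and k2: "k2 < n" and m: "m < 2 ^ s" and A: "A \<in> sets borel"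
  shows "ennreal (w k1 k2 / (real n * MM)) *
     (\<integral>\<^sup>+y. indicator {real k2 / real n .. (real k2 + 1) / real n} y * indicator A (T k1 m (sig k1 y)) \<partial>lborel)
   = emeasure lborel (A \<inter> Jt k1 k2 m)"
proof -
  have n0: "real n > 0" using n1 by simp
  define sg :: real where "sg = (if even m then 1 else -1)"
  define \<beta> where "\<beta> = sg * (c k1 * dl k1 k2 / MM) * real n"
  define \<alpha> where "\<alpha> = T k1 m (a k1 k2) - \<beta> * (real k2 / real n)"
  have absb: "\<bar>\<beta>\<bar> = w k1 k2 / (real n * MM)"
    using Wc_pos[OF k1] MM_pos n0 wpos[OF k1 k2]
    by (simp add: \<beta>_def sg_def c_def dl_def abs_mult power2_eq_square field_simps)
  have bnz: "\<beta> \<noteq> 0" using absb wpos[OF k1 k2] MM_pos n0 by auto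
  have tau: "T k1 m (sig k1 y) = \<alpha> + \<beta> * y" if "real k2 / real n \<le> y" "y \<le> (real k2 + 1) / real n" for y
  proof -
    have "T k1 m (sig k1 y) = T k1 m (a k1 k2 + dl k1 k2 * (real n * y - real k2))"
      using sig_row[OF k1 k2 that] by simp
    also have "\<dots> = \<alpha> + \<beta> * y" unfolding T_affine \<alpha>_def \<beta>_def sg_def using n0 MM_pos
      by (simp add: field_simps)
    finally show ?thesis .
  qed
  have e1: "\<alpha> + \<beta> * (real k2 / real n) = T k1 m (a k1 k2)" by (simp add: \<alpha>_def)
  have tt: "T k1 m (a k1 k2 + dl k1 k2) = T k1 m (a k1 k2) + sg * (c k1 * dl k1 k2 / MM)"
    using T_affine[of k1 m "a k1 k2" "dl k1 k2" 1] by (simp add: sg_def)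
  have e2: "\<alpha> + \<beta> * ((real k2 + 1) / real n) = T k1 m (a k1 (Suc k2))"
    unfolding a_Suc tt \<alpha>_def \<beta>_def using n0 MM_pos by (simp add: field_simps)
  have le: "(if even m then T k1 m (a k1 k2) \<le> T k1 m (a k1 (Suc k2)) else T k1 m (a k1 (Suc k2)) \<le> T k1 m (a k1 k2))"
    using T_affine[of k1 m "a k1 k2" "dl k1 k2" 1] c_pos[OF k1] dl_pos[OF k1 k2] MM_pos
    by (auto simp: a_Suc)
  have "ennreal \<bar>\<beta>\<bar> * (\<integral>\<^sup>+y. indicator {real k2 / real n .. (real k2 + 1) / real n} y * indicator A (T k1 m (sig k1 y)) \<partial>lborel)
      = emeasure lborel (A \<inter> {min (\<alpha> + \<beta> * (real k2 / real n)) (\<alpha> + \<beta> * ((real k2 + 1) / real n)) ..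
                   max (\<alpha> + \<beta> * (real k2 / real n)) (\<alpha> + \<beta> * ((real k2 + 1) / real n))})"
    using n0 by (intro affine_piece bnz tau A) (auto simp: field_simps)
  also have "\<dots> = emeasure lborel (A \<inter> Jt k1 k2 m)"
    unfolding e1 e2 Jt_def using le by (auto simp: min_def max_def)
  finally show ?thesis unfolding absb .
qed

end

context hs begin

definition "Iv k = {real k / real n .. (real k + 1) / real n}"
lemma Iv_b[measurable]: "Iv k \<in> sets borel" unfolding Iv_def by simp

lemma theta_y_meas[measurable]: "(\<lambda>y. theta (x, y)) \<in> borel_measurable borel"
  by (cases "even (mx x)"; simp add: theta_def ustar_def; measurable)

lemma xl_0: "xl k1 0 = real k1 / real n" by (simp add: xl_def)
lemma xl_top: "xl k1 (2 ^ s) = (real k1 + 1) / real n" by (simp add: xl_def MM_def)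
lemma xl_Suc: "xl k1 (Suc m) = xl k1 m + 1 / (real n * MM)"
  using n1 MM_pos by (simp add: xl_def field_simps)
lemma xl_mono: "xl k1 m \<le> xl k1 (Suc m)"
  using n1 MM_pos by (simp add: xl_Suc)

lemma cell: assumes k1: "k1 < n" and k2: "k2 < n" and A: "A \<in> sets borel"
  shows "(\<integral>\<^sup>+z. ennreal (w k1 k2) * indicator (Iv k1) (fst z) * indicator (Iv k2) (snd z) * indicator A (theta z) \<partial>lborel)
     = (\<Sum>m<2^s. emeasure lborel (A \<inter> Jt k1 k2 m))"
proof -
  have n0: "real n > 0" using n1 by simp
  define F where "F x = (\<integral>\<^sup>+y. ennreal (w k1 k2) * indicator (Iv k2) y * indicator A (theta (x, y)) \<partial>lborel)" for x
  define Fm where "Fm m = (\<integral>\<^sup>+y. ennreal (w k1 k2) * indicator (Iv k2) y * indicator A (T k1 m (sig k1 y)) \<partial>lborel)" for m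
  have meas: "(\<lambda>z. ennreal (w k1 k2) * indicator (Iv k1) (fst z) * indicator (Iv k2) (snd z) * indicator A (theta z)) \<in> borel_measurable (lborel \<Otimes>\<^sub>M lborel)"
  proof -
    have "(\<lambda>z. ennreal (w k1 k2) * indicator (Iv k1) (fst z) * indicator (Iv k2) (snd z) * indicator A (theta z)) \<in> borel_measurable (borel \<Otimes>\<^sub>M borel)"
      using theta_meas2 A by measurable
    then show ?thesis
      by (subst measurable_cong_sets[OF sets_pair_measure_cong[OF sets_lborel sets_lborel] refl])
  qed
  have "(\<integral>\<^sup>+z. ennreal (w k1 k2) * indicator (Iv k1) (fst z) * indicator (Iv k2) (snd z) * indicator A (theta z) \<partial>lborel)
     = (\<integral>\<^sup>+x. \<integral>\<^sup>+y. ennreal (w k1 k2) * indicator (Iv k1) x * indicator (Iv k2) y * indicator A (theta (x, y)) \<partial>lborel \<partial>lborel)"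
    by (subst lborel_prod[symmetric]) (rule lborel.nn_integral_fst[symmetric, OF meas, simplified])
  also have "\<dots> = (\<integral>\<^sup>+x. indicator (Iv k1) x * F x \<partial>lborel)"
  proof (intro nn_integral_cong)
    fix x
    have "(\<integral>\<^sup>+y. ennreal (w k1 k2) * indicator (Iv k1) x * indicator (Iv k2) y * indicator A (theta (x, y)) \<partial>lborel)
      = (\<integral>\<^sup>+y. indicator (Iv k1) x * (ennreal (w k1 k2) * indicator (Iv k2) y * indicator A (theta (x, y))) \<partial>lborel)"
      by (intro nn_integral_cong) (simp add: mult_ac)
    also have "\<dots> = indicator (Iv k1) x * F x" unfolding F_def
      using A pred_sets2[OF A theta_y_meas] by (intro nn_integral_cmult) measurable
    finally show "(\<integral>\<^sup>+y. ennreal (w k1 k2) * indicator (Iv k1) x * indicator (Iv k2) y * indicator A (theta (x, y)) \<partial>lborel)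
      = indicator (Iv k1) x * F x" .
  qed
  also have "\<dots> = (\<integral>\<^sup>+x. (\<Sum>m<2^s. Fm m * indicator {xl k1 m..<xl k1 (Suc m)} x) \<partial>lborel)"
  proof (intro nn_integral_cong_AE)
    show "AE x in lborel. indicator (Iv k1) x * F x = (\<Sum>m<2^s. Fm m * indicator {xl k1 m..<xl k1 (Suc m)} x)"
      using AE_lborel_singleton[of "(real k1 + 1) / real n"]
    proof eventually_elim
      fix x :: real assume x: "x \<noteq> (real k1 + 1) / real n"
      have "indicator (Iv k1) x = (indicator {xl k1 0..<xl k1 (2^s)} x :: ennreal)"
        using x unfolding xl_0 xl_top Iv_def by (auto simp: indicator_def)
      also have "\<dots> = (\<Sum>m<2^s. indicator {xl k1 m..<xl k1 (Suc m)} x)"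
        by (rule ind_partition) (rule xl_mono)
      finally have "indicator (Iv k1) x * F x = (\<Sum>m<2^s. F x * indicator {xl k1 m..<xl k1 (Suc m)} x)"
        by (metis sum_distrib_left mult.commute)
      also have "\<dots> = (\<Sum>m<2^s. Fm m * indicator {xl k1 m..<xl k1 (Suc m)} x)"
      proof (intro sum.cong refl)
        fix m :: nat assume m: "m \<in> {..<2^s}"
        show "F x * indicator {xl k1 m..<xl k1 (Suc m)} x = Fm m * indicator {xl k1 m..<xl k1 (Suc m)} x"
        proof (cases "x \<in> {xl k1 m..<xl k1 (Suc m)}")
          case True
          then have "F x = Fm m" unfolding F_def Fm_def
            using theta_strip[OF k1 _ , of m x] m by simp
          then show ?thesis by simp
        qed simp
      qed
      finally show "indicator (Iv k1) x * F x = (\<Sum>m<2^s. Fm m * indicator {xl k1 m..<xl k1 (Suc m)} x)" .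
    qed
  qed
  also have "\<dots> = (\<Sum>m<2^s. Fm m * emeasure lborel {xl k1 m..<xl k1 (Suc m)})"
    by (subst nn_integral_sum) (auto simp: nn_integral_cmult_indicator)
  also have "\<dots> = (\<Sum>m<2^s. emeasure lborel (A \<inter> Jt k1 k2 m))"
  proof (intro sum.cong refl)
    fix m :: nat assume m: "m \<in> {..<2^s}"
    have fm: "Fm m = ennreal (w k1 k2) * (\<integral>\<^sup>+y. indicator (Iv k2) y * indicator A (T k1 m (sig k1 y)) \<partial>lborel)"
    proof -
      have "(\<lambda>y. T k1 m (sig k1 y)) \<in> borel_measurable borel"
        by (cases "even m"; simp add: T_def ustar_def; measurable)
      then have "(\<lambda>y. indicator (Iv k2) y * indicator A (T k1 m (sig k1 y)) :: ennreal) \<in> borel_measurable borel"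
        using A pred_sets2[OF A] by measurable
      then show ?thesis unfolding Fm_def
        by (subst nn_integral_cmult[symmetric]) (auto simp: mult.assoc)
    qed
    have em: "emeasure lborel {xl k1 m..<xl k1 (Suc m)} = ennreal (1 / (real n * MM))"
      using xl_mono[of k1 m] by (simp add: xl_Suc)
    have "Fm m * emeasure lborel {xl k1 m..<xl k1 (Suc m)}
       = ennreal (w k1 k2 / (real n * MM)) * (\<integral>\<^sup>+y. indicator (Iv k2) y * indicator A (T k1 m (sig k1 y)) \<partial>lborel)"
    proof -
      have e: "ennreal (w k1 k2) * ennreal (1 / (real n * MM)) = ennreal (w k1 k2 / (real n * MM))"
        using wpos[OF k1 k2] n0 MM_pos by (simp add: ennreal_mult[symmetric])
      show ?thesis unfolding fm em e[symmetric] by (simp add: mult_ac)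
    qed
    also have "\<dots> = emeasure lborel (A \<inter> Jt k1 k2 m)"
      using row_piece[OF k1 k2 _ A, of m] m unfolding Iv_def by simp
    finally show "Fm m * emeasure lborel {xl k1 m..<xl k1 (Suc m)} = emeasure lborel (A \<inter> Jt k1 k2 m)" .
  qed
  finally show ?thesis .
qed

end

context hs begin

definition "e k1 m = C k1 + c k1 * real m / MM"

lemma T_0: "T k1 m 0 = (if even m then e k1 m else e k1 (Suc m))"
  by (simp add: T_def ustar_def e_def MM_def)
lemma T_1: "T k1 m 1 = (if even m then e k1 (Suc m) else e k1 m)"
  by (simp add: T_def ustar_def e_def MM_def field_simps)

lemma T_mono: assumes "k1 < n" "\<sigma> \<le> \<sigma>'"
  shows "if even m then T k1 m \<sigma> \<le> T k1 m \<sigma>' else T k1 m \<sigma>' \<le> T k1 m \<sigma>"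
  using assms c_pos[OF assms(1)] by (auto simp: T_def ustar_def divide_right_mono)

lemma sum_k2: assumes k1: "k1 < n" and A: "A \<in> sets borel"
  shows "(\<Sum>k2<n. emeasure lborel (A \<inter> Jt k1 k2 m)) = emeasure lborel (A \<inter> {e k1 m .. e k1 (Suc m)})"
proof (cases "even m")
  case True
  define b where "b j = T k1 m (a k1 j)" for j
  have "(\<Sum>k2<n. emeasure lborel (A \<inter> Jt k1 k2 m)) = (\<Sum>k2<n. emeasure lborel (A \<inter> {b k2 .. b (Suc k2)}))"
    using True by (simp add: Jt_def b_def)
  also have "\<dots> = emeasure lborel (A \<inter> {b 0 .. b n})"
  proof (rule telescope[OF _ A])
    fix i assume "i < n"
    then show "b i \<le> b (Suc i)" using T_mono[OF k1, of "a k1 i" "a k1 (Suc i)" m] True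
      a_mono[of i "Suc i" k1] k1 by (simp add: b_def)
  qed
  also have "\<dots> = emeasure lborel (A \<inter> {e k1 m .. e k1 (Suc m)})"
    using True a_n[OF k1] by (simp add: b_def T_0 T_1)
  finally show ?thesis .
next
  case False
  define b where "b j = T k1 m (a k1 (n - j))" for j
  have "(\<Sum>k2<n. emeasure lborel (A \<inter> Jt k1 k2 m)) = (\<Sum>i<n. emeasure lborel (A \<inter> Jt k1 (n - Suc i) m))"
    by (rule sum.nat_diff_reindex[symmetric])
  also have "\<dots> = (\<Sum>i<n. emeasure lborel (A \<inter> {b i .. b (Suc i)}))"
  proof (intro sum.cong refl)
    fix i assume "i \<in> {..<n}"
    then have "Suc (n - Suc i) = n - i" by simp
    then show "emeasure lborel (A \<inter> Jt k1 (n - Suc i) m) = emeasure lborel (A \<inter> {b i .. b (Suc i)})"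
      using False by (simp add: Jt_def b_def)
  qed
  also have "\<dots> = emeasure lborel (A \<inter> {b 0 .. b n})"
  proof (rule telescope[OF _ A])
    fix i assume i: "i < n"
    have "a k1 (n - Suc i) \<le> a k1 (n - i)" using i k1 by (intro a_mono) auto
    then show "b i \<le> b (Suc i)" using T_mono[OF k1, of "a k1 (n - Suc i)" "a k1 (n - i)" m] False
      by (simp add: b_def)
  qed
  also have "\<dots> = emeasure lborel (A \<inter> {e k1 m .. e k1 (Suc m)})"
    using False a_n[OF k1] by (simp add: b_def T_0 T_1)
  finally show ?thesis .
qed

lemma sum_m: assumes k1: "k1 < n" and A: "A \<in> sets borel"
  shows "(\<Sum>m<2^s. emeasure lborel (A \<inter> {e k1 m .. e k1 (Suc m)})) = emeasure lborel (A \<inter> {C k1 .. C (Suc k1)})"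
proof -
  have "(\<Sum>m<2^s. emeasure lborel (A \<inter> {e k1 m .. e k1 (Suc m)})) = emeasure lborel (A \<inter> {e k1 0 .. e k1 (2^s)})"
    using c_pos[OF k1] MM_pos by (intro telescope A) (simp add: e_def divide_right_mono)
  also have "\<dots> = emeasure lborel (A \<inter> {C k1 .. C (Suc k1)})" by (simp add: e_def MM_def C_Suc)
  finally show ?thesis .
qed

lemma sum_k1: assumes A: "A \<in> sets borel"
  shows "(\<Sum>k1<n. emeasure lborel (A \<inter> {C k1 .. C (Suc k1)})) = emeasure lborel (A \<inter> {0..1})"
proof -
  have "\<And>i. i < n \<Longrightarrow> C i \<le> C (Suc i)" using c_pos by (simp add: C_Suc less_imp_le)
  from telescope[where b=C and N=n, OF this A] show ?thesis using C_n by simp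
qed

end

context hs begin

lemma p_eq: "hist_density n w z = (\<Sum>k1<n. \<Sum>k2<n. w k1 k2 * indicator (Iv k1) (fst z) * indicator (Iv k2) (snd z))"
  by (cases z) (simp add: hist_density_def Iv_def indicator_times mult_ac)

lemma p_meas: "hist_density n w \<in> borel_measurable borel"
proof -
  have "(\<lambda>z. \<Sum>k1<n. \<Sum>k2<n. w k1 k2 * indicator (Iv k1) (fst z) * indicator (Iv k2) (snd z)) \<in> borel_measurable (borel \<Otimes>\<^sub>M borel)"
    by measurable
  then show ?thesis unfolding p_eq[abs_def] by (simp add: borel_prod)
qed

lemma term_nonneg: "k1 < n \<Longrightarrow> k2 < n \<Longrightarrow> 0 \<le> w k1 k2 * indicator X x * indicator Y y"
  using wpos[of k1 k2] by (simp add: indicator_def)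

lemma p_nonneg: "hist_density n w z \<ge> 0"
  unfolding p_eq by (intro sum_nonneg term_nonneg) auto

lemma ennreal_ind2: "ennreal (r * indicator X x * indicator Y y) = ennreal r * indicator X x * indicator Y y"
  by (auto simp: indicator_def)

lemma cell_meas: "A \<in> sets borel \<Longrightarrow> (\<lambda>z. ennreal (w k1 k2) * indicator (Iv k1) (fst z) * indicator (Iv k2) (snd z) * indicator A (theta z)) \<in> borel_measurable lborel"
proof -
  assume A: "A \<in> sets borel"
  have "(\<lambda>z. ennreal (w k1 k2) * indicator (Iv k1) (fst z) * indicator (Iv k2) (snd z) * indicator A (theta z)) \<in> borel_measurable (borel \<Otimes>\<^sub>M borel)"
    using theta_meas2 A by measurable
  then show ?thesis by (simp add: borel_prod measurable_cong_sets[OF sets_lborel refl])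
qed

lemma push_unif: "distr (density_measure (hist_density n w)) borel theta = unif01"
proof (rule measure_eqI)
  show "sets (distr (density_measure (hist_density n w)) borel theta) = sets unif01"
    by (simp add: unif01_def)
next
  fix A assume "A \<in> sets (distr (density_measure (hist_density n w)) borel theta)"
  then have A[measurable]: "A \<in> sets borel" by simp
  have tm: "theta \<in> measurable (density_measure (hist_density n w)) borel"
    unfolding density_measure_def by (simp add: measurable_cong_sets[OF sets_density refl])
  have pm: "(\<lambda>z. ennreal (hist_density n w z)) \<in> borel_measurable lborel"
    using p_meas by (simp add: measurable_cong_sets[OF sets_lborel refl])
  have "emeasure (distr (density_measure (hist_density n w)) borel theta) A
      = emeasure (density_measure (hist_density n w)) (theta -` A)"
    using tm A by (subst emeasure_distr) (auto simp: density_measure_def)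
  also have "\<dots> = (\<integral>\<^sup>+z. ennreal (hist_density n w z) * indicator (theta -` A) z \<partial>lborel)"
    unfolding density_measure_def using pm A measurable_sets[OF theta_meas A]
    by (intro emeasure_density) (auto simp: measurable_cong_sets[OF sets_lborel refl])
  also have "\<dots> = (\<integral>\<^sup>+z. (\<Sum>k1<n. \<Sum>k2<n. ennreal (w k1 k2) * indicator (Iv k1) (fst z) * indicator (Iv k2) (snd z) * indicator A (theta z)) \<partial>lborel)"
  proof (intro nn_integral_cong)
    fix z :: "real \<times> real"
    have "ennreal (hist_density n w z) = (\<Sum>k1<n. \<Sum>k2<n. ennreal (w k1 k2 * indicator (Iv k1) (fst z) * indicator (Iv k2) (snd z)))"
    proof -
      have "ennreal (hist_density n w z) = (\<Sum>k1<n. ennreal (\<Sum>k2<n. w k1 k2 * indicator (Iv k1) (fst z) * indicator (Iv k2) (snd z)))"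
        unfolding p_eq by (rule sum_ennreal[symmetric]) (intro sum_nonneg term_nonneg, auto)
      also have "\<dots> = (\<Sum>k1<n. \<Sum>k2<n. ennreal (w k1 k2 * indicator (Iv k1) (fst z) * indicator (Iv k2) (snd z)))"
        by (intro sum.cong refl sum_ennreal[symmetric] term_nonneg) auto
      finally show ?thesis .
    qed
    then show "ennreal (hist_density n w z) * indicator (theta -` A) z = (\<Sum>k1<n. \<Sum>k2<n. ennreal (w k1 k2) * indicator (Iv k1) (fst z) * indicator (Iv k2) (snd z) * indicator A (theta z))"
      by (simp only: ennreal_ind2 sum_distrib_right indicator_vimage)
  qed
  also have "\<dots> = (\<Sum>k1<n. \<Sum>k2<n. \<integral>\<^sup>+z. ennreal (w k1 k2) * indicator (Iv k1) (fst z) * indicator (Iv k2) (snd z) * indicator A (theta z) \<partial>lborel)"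
  proof -
    have m1: "(\<lambda>z. \<Sum>k2<n. ennreal (w k1 k2) * indicator (Iv k1) (fst z) * indicator (Iv k2) (snd z) * indicator A (theta z)) \<in> borel_measurable lborel" for k1
      by (rule borel_measurable_sum, rule cell_meas[OF A])
    show ?thesis
      by (subst nn_integral_sum, rule m1, rule sum.cong[OF refl], rule nn_integral_sum, rule cell_meas[OF A])
  qed
  also have "\<dots> = (\<Sum>k1<n. \<Sum>k2<n. \<Sum>m<2^s. emeasure lborel (A \<inter> Jt k1 k2 m))"
    using cell A by simp
  also have "\<dots> = (\<Sum>k1<n. \<Sum>m<2^s. \<Sum>k2<n. emeasure lborel (A \<inter> Jt k1 k2 m))"
    by (simp add: sum.swap[of _ "{..<n}" "{..<2^s}"])
  also have "\<dots> = (\<Sum>k1<n. emeasure lborel (A \<inter> {C k1 .. C (Suc k1)}))"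
    using sum_k2 sum_m A by simp
  also have "\<dots> = emeasure lborel (A \<inter> {0..1})" using sum_k1 A by simp
  also have "\<dots> = emeasure unif01 A" using A by (simp add: unif01_def Int_commute divide_ennreal_def)
  finally show "emeasure (distr (density_measure (hist_density n w)) borel theta) A = emeasure unif01 A" .
qed

end

lemma relu_meas[measurable]: "relu \<in> borel_measurable borel"
  unfolding relu_def[abs_def] by measurable

lemma g_meas[measurable]: "g \<in> borel_measurable borel"
  unfolding g_def[abs_def] by measurable

lemma gk_meas[measurable]: "(g ^^ k) \<in> borel_measurable borel"
  by (induction k) (auto intro: measurable_compose)

context hs begin

lemma Vf_meas[measurable]: "Vf \<in> borel_measurable borel"
  unfolding Vf_sum[abs_def] by measurable
lemma Tf_meas[measurable]: "Tf \<in> borel_measurable borel"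
  unfolding Tf_sum[abs_def] by measurable
lemma vv_meas[measurable]: "vv \<in> borel_measurable borel"
  unfolding vv_def[abs_def] by measurable
lemma phi_meas[measurable]: "phi \<in> borel_measurable borel"
  unfolding phi_def[abs_def] by measurable
lemma Xf_meas[measurable]: "Xf \<in> borel_measurable borel"
  unfolding Xf_def[abs_def] by measurable
lemma Yf_meas[measurable]: "Yf \<in> borel_measurable borel"
  unfolding Yf_sum[abs_def] Dk_def by measurable

lemma f_meas: "net_fun_1_2 Psi \<in> borel_measurable borel"
proof -
  have "(\<lambda>t. (Xf t, Yf t)) \<in> measurable borel (borel \<Otimes>\<^sub>M borel)" by measurable
  then show ?thesis unfolding net_fun_Psi[abs_def] by (simp add: borel_prod)
qed

lemma p_support: "hist_density n w z \<noteq> 0 \<Longrightarrow> 0 \<le> fst z \<and> fst z \<le> 1 \<and> 0 \<le> snd z \<and> snd z \<le> 1"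
proof (rule ccontr)
  assume h: "hist_density n w z \<noteq> 0" and c: "\<not> (0 \<le> fst z \<and> fst z \<le> 1 \<and> 0 \<le> snd z \<and> snd z \<le> 1)"
  have sub: "Iv k \<subseteq> {0..1}" if "k < n" for k
  proof -
    have "(real k + 1) / real n \<le> 1" using that n1 by (simp add: field_simps)
    then show ?thesis unfolding Iv_def by auto
  qed
  have zero: "w k1 k2 * indicator (Iv k1) (fst z) * indicator (Iv k2) (snd z) = 0" if "k1 < n" "k2 < n" for k1 k2
    using c sub[OF that(1)] sub[OF that(2)] by (auto simp: indicator_def)
  have "hist_density n w z = 0" unfolding p_eq
    by (intro sum.neutral ballI) (simp only: lessThan_iff zero)
  then show False using h by simp
qed

lemma nu_total: "emeasure (density_measure (hist_density n w)) UNIV = 1"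
proof -
  have "emeasure (density_measure (hist_density n w)) UNIV = emeasure (distr (density_measure (hist_density n w)) borel theta) UNIV"
    using theta_meas by (subst emeasure_distr) (auto simp: density_measure_def measurable_cong_sets[OF sets_density refl])
  also have "\<dots> = 1" unfolding push_unif by (simp add: unif01_def divide_ennreal_def)
  finally show ?thesis .
qed

lemma W_bound: "wasserstein1 (pushforward_U (net_fun_1_2 Psi)) (density_measure (hist_density n w))
   \<le> ennreal (1 / (real n * 2 ^ s))"
proof -
  define f where "f = net_fun_1_2 Psi"
  define \<nu> where "\<nu> = density_measure (hist_density n w)"
  define \<mu> where "\<mu> = pushforward_U f"
  define F where "F z = (f (theta z), z)" for z
  define \<pi> where "\<pi> = distr \<nu> (\<mu> \<Otimes>\<^sub>M \<nu>) F"
  have fm[measurable]: "f \<in> borel_measurable borel" unfolding f_def by (rule f_meas)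
  have sn: "sets \<nu> = sets borel" by (simp add: \<nu>_def density_measure_def)
  have sm: "sets \<mu> = sets borel" by (simp add: \<mu>_def pushforward_U_def)
  have ft: "(\<lambda>z. f (theta z)) \<in> measurable \<nu> \<mu>"
    by (simp add: measurable_cong_sets[OF sn sm])
  have Fm: "F \<in> measurable \<nu> (\<mu> \<Otimes>\<^sub>M \<nu>)"
    unfolding F_def by (rule measurable_Pair[OF ft]) simp
  have c: "coupling \<mu> \<nu> \<pi>"
    unfolding coupling_def
  proof (intro conjI)
    show "sets \<pi> = sets (\<mu> \<Otimes>\<^sub>M \<nu>)" by (simp add: \<pi>_def)
    have "distr \<pi> \<mu> fst = distr \<nu> \<mu> (\<lambda>z. f (theta z))"
      unfolding \<pi>_def using Fm by (subst distr_distr) (auto simp: F_def comp_def)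
    also have "\<dots> = distr \<nu> borel (\<lambda>z. f (theta z))"
      by (rule distr_cong) (auto simp: sm)
    also have "\<dots> = distr (distr \<nu> borel theta) borel f"
      using theta_meas by (subst distr_distr) (auto simp: comp_def measurable_cong_sets[OF sn refl])
    also have "\<dots> = \<mu>" unfolding \<nu>_def push_unif \<mu>_def pushforward_U_def ..
    finally show "distr \<pi> \<mu> fst = \<mu>" .
    have "distr \<pi> \<nu> snd = distr \<nu> \<nu> (\<lambda>z. z)"
      unfolding \<pi>_def using Fm by (subst distr_distr) (auto simp: F_def comp_def)
    also have "\<dots> = \<nu>" by (rule distr_id2) simp
    finally show "distr \<pi> \<nu> snd = \<nu>" .
  qed
  have "wasserstein1 \<mu> \<nu> \<le> (\<integral>\<^sup>+ z. ennreal (dist (fst z) (snd z)) \<partial>\<pi>)"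
    unfolding wasserstein1_def using c by (intro INF_lower) simp
  also have "\<dots> = (\<integral>\<^sup>+ z. ennreal (dist (f (theta z)) z) \<partial>\<nu>)"
  proof -
    have "(\<lambda>z. ennreal (dist (fst z) (snd z))) \<in> borel_measurable (\<mu> \<Otimes>\<^sub>M \<nu>)"
    proof -
      have "(\<lambda>z. ennreal (dist (fst z) (snd z))) \<in> borel_measurable ((borel :: (real \<times> real) measure) \<Otimes>\<^sub>M borel)"
        by measurable
      then show ?thesis by (simp add: measurable_cong_sets[OF sets_pair_measure_cong[OF sm sn] refl])
    qed
    then show ?thesis unfolding \<pi>_def using Fm by (subst nn_integral_distr) (auto simp: F_def)
  qed
  also have "\<dots> = (\<integral>\<^sup>+ z. ennreal (hist_density n w z) * ennreal (dist (f (theta z)) z) \<partial>lborel)"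
    unfolding \<nu>_def density_measure_def
    by (rule nn_integral_density) (use p_meas in \<open>auto simp: measurable_cong_sets[OF sets_lborel refl]\<close>)
  also have "\<dots> \<le> (\<integral>\<^sup>+ z. ennreal (1 / (real n * 2 ^ s)) * ennreal (hist_density n w z) \<partial>lborel)"
  proof (intro nn_integral_mono)
    fix z :: "real \<times> real"
    show "ennreal (hist_density n w z) * ennreal (dist (f (theta z)) z) \<le> ennreal (1 / (real n * 2 ^ s)) * ennreal (hist_density n w z)"
    proof (cases "hist_density n w z = 0")
      case False
      obtain x y where z: "z = (x, y)" by (cases z)
      have b: "0 \<le> x" "x \<le> 1" "0 \<le> y" "y \<le> 1" using p_support[OF False] z by auto
      have "dist (f (theta z)) z = \<bar>Xf (theta (x, y)) - x\<bar>"
        unfolding f_def net_fun_Psi z using key(3)[OF b] by (simp add: dist_Pair_Pair dist_real_def)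
      also have "\<dots> \<le> 1 / (real n * 2 ^ s)" by (rule key(4)[OF b])
      finally have "ennreal (dist (f (theta z)) z) \<le> ennreal (1 / (real n * 2 ^ s))" by (rule ennreal_leI)
      then show ?thesis by (simp add: mult.commute mult_left_mono)
    qed simp
  qed
  also have "\<dots> = ennreal (1 / (real n * 2 ^ s)) * (\<integral>\<^sup>+ z. ennreal (hist_density n w z) \<partial>lborel)"
    by (rule nn_integral_cmult) (use p_meas in \<open>auto simp: measurable_cong_sets[OF sets_lborel refl]\<close>)
  also have "(\<integral>\<^sup>+ z. ennreal (hist_density n w z) \<partial>lborel) = 1"
  proof -
    have "emeasure \<nu> UNIV = (\<integral>\<^sup>+ z. ennreal (hist_density n w z) * indicator UNIV z \<partial>lborel)"
      unfolding \<nu>_def density_measure_def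
      by (rule emeasure_density) (use p_meas in \<open>auto simp: measurable_cong_sets[OF sets_lborel refl]\<close>)
    then show ?thesis using nu_total unfolding \<nu>_def by simp
  qed
  finally show ?thesis unfolding \<mu>_def \<nu>_def f_def by simp
qed

end

theorem mainTheorem8:
  fixes n s :: nat and p :: "real \<times> real \<Rightarrow> real"
  assumes "n \<ge> 1" and "s \<ge> 1"
    and "p \<in> hist_class n"
  shows "\<exists>\<Psi> \<in> relu_nets 1 2.
           connectivity \<Psi> < 88 * (n ^ 2 + n * s) \<and> depth \<Psi> = s + 5 \<and>
           wasserstein1 (pushforward_U (net_fun_1_2 \<Psi>)) (density_measure p)
             \<le> ennreal (2 * sqrt 2 / (real n * 2 ^ s))"
proof -
  from assms(3) obtain w where p: "p = hist_density n w"
    and wp: "\<forall>k1<n. \<forall>k2<n. w k1 k2 > 0" and ws: "(\<Sum>k1<n. \<Sum>k2<n. w k1 k2) = real n ^ 2"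
    unfolding hist_class_def by auto
  interpret H: hs n s w
    using assms(1,2) wp ws by unfold_locales auto
  have le: "1 / (real n * 2 ^ s) \<le> 2 * sqrt 2 / (real n * 2 ^ s)"
  proof -
    have "(1::real) \<le> 2 * sqrt 2"
    proof -
      have "(1::real) \<le> sqrt 2" by simp
      then show ?thesis by linarith
    qed
    moreover have "0 < real n * 2 ^ s" using assms(1) by simp
    ultimately show ?thesis by (simp add: divide_right_mono)
  qed
  show ?thesis
  proof (intro bexI[of _ H.Psi] conjI)
    show "H.Psi \<in> relu_nets 1 2" by (rule H.Psi_net)
    show "connectivity H.Psi < 88 * (n ^ 2 + n * s)" by (rule H.conn_Psi)
    show "depth H.Psi = s + 5" by (rule H.depth_Psi)
    show "wasserstein1 (pushforward_U (net_fun_1_2 H.Psi)) (density_measure p)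
             \<le> ennreal (2 * sqrt 2 / (real n * 2 ^ s))"
      unfolding p using H.W_bound le by (meson ennreal_leI order.trans)
  qed
qed

end
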